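(* Let $\mathcal{T}$ be an unweighted tree on $L$ vertices and let $f:\mathbb{N}\to\mathbb{R}$ be an arbitrary function. Then the mask matrix $\mathbf{M} = [f(\mathrm{dist}_{\mathcal{T}}(i,j))]_{i,j=1,\dots,L}$ supports matrix-vector multiplication in time $O(L\log^2 L)$. Consequently $(\mathcal{T}, f)$ is tractable.
   Context: $\mathrm{dist}_{\mathcal{T}}(i,j)$ is the number of edges on the path between $i$ and $j$. A pair $(\mathcal{T},f)$ is tractable if $\mathbf{M}\mathbf{x}$ can be computed for every $\mathbf{x}\in\mathbb{R}^L$ in $o(L^2)$ time. Values of $f$ are assumed available in $O(1)$ time each; time counts arithmetic operations. *)

theory Defs
  imports Complex_Main
begin

definition is_walk :: "nat set set \<Rightarrow> nat list \<Rightarrow> bool" where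
  "is_walk E ws \<longleftrightarrow> ws \<noteq> [] \<and> (\<forall>k. Suc k < length ws \<longrightarrow> {ws ! k, ws ! Suc k} \<in> E)"

definition is_tree :: "nat \<Rightarrow> nat set set \<Rightarrow> bool" where
  "is_tree L E \<longleftrightarrow>
     (\<forall>e\<in>E. \<exists>u v. e = {u, v} \<and> u \<noteq> v \<and> u < L \<and> v < L) \<and>
     finite E \<and> card E = L - 1 \<and>
     (\<forall>i<L. \<forall>j<L. \<exists>ws. is_walk E ws \<and> hd ws = i \<and> last ws = j)"

definition tree_dist :: "nat set set \<Rightarrow> nat \<Rightarrow> nat \<Rightarrow> nat" where
  "tree_dist E i j = (LEAST n. \<exists>ws. is_walk E ws \<and> hd ws = i \<and> last ws = j \<and> length ws = Suc n)"

text \<open>A program reads the input vector x, the values f k (each in O(1)), real constants,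
  and performs arithmetic operations on previously computed registers. Its cost is its length.
  The program may depend on the tree, but not on f or x.\<close>
datatype instr = Const real | InX nat | InF nat
  | Add nat nat | Sub nat nat | Mul nat nat | Div nat nat

definition reg :: "real list \<Rightarrow> nat \<Rightarrow> real" where
  "reg vs k = (if k < length vs then vs ! k else 0)"

fun exec_instr :: "(nat \<Rightarrow> real) \<Rightarrow> (nat \<Rightarrow> real) \<Rightarrow> real list \<Rightarrow> instr \<Rightarrow> real" where
  "exec_instr f x vs (Const c) = c"
| "exec_instr f x vs (InX i) = x i"
| "exec_instr f x vs (InF k) = f k"
| "exec_instr f x vs (Add a b) = reg vs a + reg vs b"
| "exec_instr f x vs (Sub a b) = reg vs a - reg vs b"
| "exec_instr f x vs (Mul a b) = reg vs a * reg vs b"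
| "exec_instr f x vs (Div a b) = reg vs a / reg vs b"

definition run_prog :: "instr list \<Rightarrow> (nat \<Rightarrow> real) \<Rightarrow> (nat \<Rightarrow> real) \<Rightarrow> real list" where
  "run_prog p f x = foldl (\<lambda>vs ins. vs @ [exec_instr f x vs ins]) [] p"

definition prog_val :: "instr list \<Rightarrow> (nat \<Rightarrow> real) \<Rightarrow> (nat \<Rightarrow> real) \<Rightarrow> nat \<Rightarrow> real" where
  "prog_val p f x r = reg (run_prog p f x) r"

end

theory Submission
  imports Defs
begin


type_synonym inp = "(nat \<Rightarrow> real) \<times> (nat \<Rightarrow> real)"

definition ev :: "instr list \<Rightarrow> nat \<Rightarrow> inp \<Rightarrow> real" where
  "ev p r = (\<lambda>i. prog_val p (fst i) (snd i) r)"

definition R :: "instr list \<Rightarrow> nat \<Rightarrow> (inp \<Rightarrow> real) \<Rightarrow> bool" where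
  "R p r v \<longleftrightarrow> r < length p \<and> ev p r = v"

lemma run_prog_snoc: "run_prog (p @ [ins]) f x = run_prog p f x @ [exec_instr f x (run_prog p f x) ins]"
  by (simp add: run_prog_def)

lemma length_run_prog[simp]: "length (run_prog p f x) = length p"
  by (induction p rule: rev_induct) (simp_all add: run_prog_snoc, simp add: run_prog_def)

lemma run_prog_append: "\<exists>ys. run_prog (p @ q) f x = run_prog p f x @ ys"
proof (induction q rule: rev_induct)
  case Nil then show ?case by simp
next
  case (snoc a q)
  then obtain ys where "run_prog (p @ q) f x = run_prog p f x @ ys" by blast
  then show ?case using run_prog_snoc[of "p@q" a f x] by (metis append_assoc)
qed

lemma prog_val_ext: "r < length p \<Longrightarrow> prog_val (p @ q) f x r = prog_val p f x r"
proof -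
  assume r: "r < length p"
  obtain ys where "run_prog (p @ q) f x = run_prog p f x @ ys" using run_prog_append by blast
  then show ?thesis using r by (simp add: prog_val_def reg_def nth_append)
qed

lemma R_ext: "R p r v \<Longrightarrow> R (p @ q) r v"
  unfolding R_def ev_def by (auto simp: prog_val_ext)

lemma ev_snoc: "ev (p @ [ins]) (length p) = (\<lambda>i. exec_instr (fst i) (snd i) (run_prog p (fst i) (snd i)) ins)"
  by (simp add: ev_def prog_val_def reg_def run_prog_snoc nth_append)

lemma reg_run: "reg (run_prog p f x) a = ev p a (f, x)"
  by (simp add: ev_def prog_val_def)

lemma R_Const: "R (p @ [Const c]) (length p) (\<lambda>_. c)"
  by (simp add: R_def ev_snoc)
lemma R_InX: "R (p @ [InX j]) (length p) (\<lambda>i. snd i j)"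
  by (simp add: R_def ev_snoc)
lemma R_InF: "R (p @ [InF j]) (length p) (\<lambda>i. fst i j)"
  by (simp add: R_def ev_snoc)
lemma R_Add: "R p a va \<Longrightarrow> R p b vb \<Longrightarrow> R (p @ [Add a b]) (length p) (\<lambda>i. va i + vb i)"
  by (auto simp: R_def ev_snoc reg_run)
lemma R_Sub: "R p a va \<Longrightarrow> R p b vb \<Longrightarrow> R (p @ [Sub a b]) (length p) (\<lambda>i. va i - vb i)"
  by (auto simp: R_def ev_snoc reg_run)
lemma R_Mul: "R p a va \<Longrightarrow> R p b vb \<Longrightarrow> R (p @ [Mul a b]) (length p) (\<lambda>i. va i * vb i)"
  by (auto simp: R_def ev_snoc reg_run)

lemma iter_gen:
  assumes step: "\<And>p y. y \<in> set ys \<Longrightarrow> Inv p \<Longrightarrow> \<exists>q r. length q \<le> c y \<and> Q (p @ q) y r"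
    and monoQ: "\<And>p q y r. Q p y r \<Longrightarrow> Q (p @ q) y r"
    and monoI: "\<And>p q. Inv p \<Longrightarrow> Inv (p @ q)"
    and I: "Inv p"
  shows "\<exists>q rf. length q \<le> (\<Sum>y\<leftarrow>ys. c y) \<and> (\<forall>y\<in>set ys. Q (p @ q) y (rf y))"
  using step I
proof (induction ys arbitrary: p)
  case Nil
  then show ?case by (intro exI[of _ "[]"]) auto
next
  case (Cons a ys)
  obtain q1 r1 where q1: "length q1 \<le> c a" "Q (p @ q1) a r1" using Cons.prems by force
  have "\<exists>q rf. length q \<le> (\<Sum>y\<leftarrow>ys. c y) \<and> (\<forall>y\<in>set ys. Q ((p @ q1) @ q) y (rf y))"
    using Cons.prems monoI by (intro Cons.IH) auto
  then obtain q2 rf where q2: "length q2 \<le> (\<Sum>y\<leftarrow>ys. c y)" "\<forall>y\<in>set ys. Q ((p @ q1) @ q2) y (rf y)"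
    by blast
  show ?case
    apply (rule exI[of _ "q1 @ q2"], rule exI[of _ "rf(a := r1)"])
    using q1 q2 monoQ[of "p @ q1" a r1 q2] by auto
qed



definition RC :: "instr list \<Rightarrow> nat \<times> nat \<Rightarrow> (inp \<Rightarrow> complex) \<Rightarrow> bool" where
  "RC p r z \<longleftrightarrow> R p (fst r) (\<lambda>i. Re (z i)) \<and> R p (snd r) (\<lambda>i. Im (z i))"

lemma RC_ext: "RC p r z \<Longrightarrow> RC (p @ q) r z"
  unfolding RC_def using R_ext by blast

lemma cadd:
  assumes "RC p r z" "RC p s u"
  shows "\<exists>q r'. length q = 2 \<and> RC (p @ q) r' (\<lambda>i. z i + u i)"
proof -
  obtain a b where r: "r = (a,b)" by (cases r)
  obtain c d where s: "s = (c,d)" by (cases s)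
  define p1 where "p1 = p @ [Add a c]"
  have h1: "R p1 (length p) (\<lambda>i. Re (z i) + Re (u i))"
    unfolding p1_def using assms r s by (intro R_Add) (auto simp: RC_def)
  define p2 where "p2 = p1 @ [Add b d]"
  have h2: "R p2 (length p1) (\<lambda>i. Im (z i) + Im (u i))"
    unfolding p2_def using assms r s by (intro R_Add R_ext) (auto simp: RC_def p1_def intro: R_ext)
  have "RC p2 (length p, length p1) (\<lambda>i. z i + u i)"
    unfolding RC_def using h2 R_ext[OF h1, of "[Add b d]"] by (simp add: p2_def)
  then show ?thesis unfolding p2_def p1_def
    by (intro exI[of _ "[Add a c, Add b d]"]) auto
qed

lemma cmul:
  assumes "RC p r z" "RC p s u"
  shows "\<exists>q r'. length q = 6 \<and> RC (p @ q) r' (\<lambda>i. z i * u i)"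
proof -
  obtain a b where r: "r = (a,b)" by (cases r)
  obtain c d where s: "s = (c,d)" by (cases s)
  have A: "R p a (\<lambda>i. Re (z i))" "R p b (\<lambda>i. Im (z i))" "R p c (\<lambda>i. Re (u i))" "R p d (\<lambda>i. Im (u i))"
    using assms r s by (auto simp: RC_def)
  define n where "n = length p"
  define p1 where "p1 = p @ [Mul a c]"
  have h1: "R p1 n (\<lambda>i. Re (z i) * Re (u i))" unfolding p1_def n_def using A by (intro R_Mul)
  define p2 where "p2 = p1 @ [Mul b d]"
  have h2: "R p2 (n+1) (\<lambda>i. Im (z i) * Im (u i))" unfolding p2_def p1_def n_def using A
    by (metis R_Mul R_ext length_append_singleton Suc_eq_plus1)
  define p3 where "p3 = p2 @ [Sub n (n+1)]"
  have h1': "R p2 n (\<lambda>i. Re (z i) * Re (u i))" unfolding p2_def by (rule R_ext[OF h1])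
  have h3: "R p3 (n+2) (\<lambda>i. Re (z i) * Re (u i) - Im (z i) * Im (u i))"
    using R_Sub[OF h1' h2] unfolding p3_def by (simp add: p2_def p1_def n_def)
  define p4 where "p4 = p3 @ [Mul a d]"
  have h4: "R p4 (n+3) (\<lambda>i. Re (z i) * Im (u i))"
    using R_Mul[OF R_ext[OF A(1), of "[Mul a c, Mul b d, Sub n (n+1)]"] R_ext[OF A(4), of "[Mul a c, Mul b d, Sub n (n+1)]"]]
    unfolding p4_def p3_def p2_def p1_def n_def by (simp add: numeral_eq_Suc)
  define p5 where "p5 = p4 @ [Mul b c]"
  have h5: "R p5 (n+4) (\<lambda>i. Im (z i) * Re (u i))"
    using R_Mul[OF R_ext[OF A(2), of "[Mul a c, Mul b d, Sub n (n+1), Mul a d]"] R_ext[OF A(3), of "[Mul a c, Mul b d, Sub n (n+1), Mul a d]"]]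
    unfolding p5_def p4_def p3_def p2_def p1_def n_def by (simp add: numeral_eq_Suc)
  define p6 where "p6 = p5 @ [Add (n+3) (n+4)]"
  have h6: "R p6 (n+5) (\<lambda>i. Re (z i) * Im (u i) + Im (z i) * Re (u i))"
    using R_Add[OF R_ext[OF h4, of "[Mul b c]"] h5[unfolded p5_def]]
    unfolding p6_def p5_def p4_def p3_def p2_def p1_def n_def by (simp add: numeral_eq_Suc)
  have h3': "R p6 (n+2) (\<lambda>i. Re (z i) * Re (u i) - Im (z i) * Im (u i))"
    using R_ext[OF h3, of "[Mul a d, Mul b c, Add (n+3) (n+4)]"] unfolding p6_def p5_def p4_def by simp
  have "RC p6 (n+2, n+5) (\<lambda>i. z i * u i)"
    unfolding RC_def using h3' h6 by simp
  moreover have "p6 = p @ [Mul a c, Mul b d, Sub n (n+1), Mul a d, Mul b c, Add (n+3) (n+4)]"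
    unfolding p6_def p5_def p4_def p3_def p2_def p1_def by simp
  ultimately show ?thesis by (intro exI[of _ "[Mul a c, Mul b d, Sub n (n+1), Mul a d, Mul b c, Add (n+3) (n+4)]"]) auto
qed

lemma cconst:
  "\<exists>q r'. length q = 2 \<and> RC (p @ q) r' (\<lambda>i. w)"
proof -
  have h1: "R (p @ [Const (Re w)]) (length p) (\<lambda>i. Re w)" by (rule R_Const)
  have h2: "R ((p @ [Const (Re w)]) @ [Const (Im w)]) (Suc (length p)) (\<lambda>i. Im w)"
    using R_Const[of "p @ [Const (Re w)]"] by simp
  have "RC (p @ [Const (Re w), Const (Im w)]) (length p, Suc (length p)) (\<lambda>i. w)"
    unfolding RC_def using R_ext[OF h1, of "[Const (Im w)]"] h2 by simp
  then show ?thesis by (intro exI[of _ "[Const (Re w), Const (Im w)]"]) auto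
qed

lemma cmul_const:
  assumes "RC p r z"
  shows "\<exists>q r'. length q = 8 \<and> RC (p @ q) r' (\<lambda>i. w * z i)"
proof -
  obtain q1 r1 where 1: "length q1 = 2" "RC (p @ q1) r1 (\<lambda>i. w)" using cconst by blast
  obtain q2 r2 where 2: "length q2 = 6" "RC ((p @ q1) @ q2) r2 (\<lambda>i. w * z i)"
    using cmul[OF 1(2) RC_ext[OF assms]] by blast
  show ?thesis using 1 2 by (intro exI[of _ "q1 @ q2"] exI[of _ r2]) auto
qed

lemma cfma:
  assumes "RC p r z" "RC p s u"
  shows "\<exists>q r'. length q = 10 \<and> RC (p @ q) r' (\<lambda>i. u i + w * z i)"
proof -
  obtain q1 r1 where 1: "length q1 = 8" "RC (p @ q1) r1 (\<lambda>i. w * z i)" using cmul_const[OF assms(1)] by blast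
  obtain q2 r2 where 2: "length q2 = 2" "RC ((p @ q1) @ q2) r2 (\<lambda>i. u i + w * z i)"
    using cadd[OF RC_ext[OF assms(2)] 1(2)] by blast
  show ?thesis using 1 2 by (intro exI[of _ "q1 @ q2"] exI[of _ r2]) auto
qed



lemma sum_split2: "(\<Sum>s<2*(M::nat). g s) = (\<Sum>s<M. g (2*s)) + (\<Sum>s<M. (g (2*s+1)::'a::comm_monoid_add))"
  by (induction M) (simp_all add: algebra_simps)

lemma pow_mod2:
  fixes z :: complex
  assumes "z^(2*M) = 1"
  shows "(z^2)^((j mod M)*s) = z^(j*(2*s))"
proof -
  have "j*(2*s) = 2*((j mod M)*s) + (2*M)*((j div M)*s)"
    by (metis (no_types, lifting) add.commute div_mult_mod_eq mult.assoc mult.left_commute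
        distrib_left distrib_right)
  then have "z^(j*(2*s)) = (z^2)^((j mod M)*s) * (z^(2*M))^((j div M)*s)"
    by (simp add: power_add power_mult)
  then show ?thesis using assms by simp
qed

lemma fft_split:
  fixes a :: "nat \<Rightarrow> complex" and z :: complex
  assumes "z^(2*M) = 1"
  shows "(\<Sum>s<2*M. a s * z^(j*s)) = (\<Sum>s<M. a (2*s) * (z^2)^((j mod M)*s))
          + z^j * (\<Sum>s<M. a (2*s+1) * (z^2)^((j mod M)*s))"
proof -
  have "(\<Sum>s<2*M. a s * z^(j*s)) = (\<Sum>s<M. a (2*s) * z^(j*(2*s))) + (\<Sum>s<M. a (2*s+1) * z^(j*(2*s+1)))"
    by (rule sum_split2)
  also have "\<dots> = (\<Sum>s<M. a (2*s) * (z^2)^((j mod M)*s)) + (\<Sum>s<M. z^j * (a (2*s+1) * (z^2)^((j mod M)*s)))"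
  proof -
    have e1: "\<And>s. z^(j*(2*s)) = (z^2)^((j mod M)*s)" using pow_mod2[OF assms] by simp
    have e2: "\<And>s. z^(j*(2*s+1)) = z^j * (z^2)^((j mod M)*s)"
      using e1 by (simp add: distrib_left power_add mult.commute)
    show ?thesis by (simp only: e1 e2 mult.left_commute)
  qed
  finally show ?thesis by (simp add: sum_distrib_left)
qed

definition RCV :: "instr list \<Rightarrow> (nat \<times> nat) list \<Rightarrow> (nat \<Rightarrow> inp \<Rightarrow> complex) \<Rightarrow> nat \<Rightarrow> bool" where
  "RCV p rs a n \<longleftrightarrow> length rs = n \<and> (\<forall>s<n. RC p (rs!s) (a s))"

lemma RCV_ext: "RCV p rs a n \<Longrightarrow> RCV (p @ q) rs a n"
  unfolding RCV_def using RC_ext by blast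

lemma fft:
  "RCV p rs a (2^k) \<Longrightarrow> z^(2^k) = 1 \<Longrightarrow>
   \<exists>q os. length q \<le> 10*k*2^k \<and> RCV (p @ q) os (\<lambda>j i. \<Sum>s<2^k. a s i * z^(j*s)) (2^k)"
proof (induction k arbitrary: p rs a z)
  case 0
  then show ?case by (intro exI[of _ "[]"] exI[of _ rs]) (auto simp: RCV_def)
next
  case (Suc k)
  define M where "M = (2::nat)^k"
  have M2: "(2::nat)^Suc k = 2*M" by (simp add: M_def)
  have zM: "(z^2)^(2^k) = 1" using Suc.prems(2) by (simp add: power_mult[symmetric] mult.commute)
  have ev: "RCV p (map (\<lambda>s. rs!(2*s)) [0..<M]) (\<lambda>s. a (2*s)) (2^k)"
    using Suc.prems(1) unfolding RCV_def M2 by (auto simp: M_def)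
  obtain q1 os1 where q1: "length q1 \<le> 10*k*2^k"
     "RCV (p @ q1) os1 (\<lambda>j i. \<Sum>s<2^k. a (2*s) i * (z^2)^(j*s)) (2^k)"
    using Suc.IH[OF ev zM] by blast
  have od: "RCV (p @ q1) (map (\<lambda>s. rs!(2*s+1)) [0..<M]) (\<lambda>s. a (2*s+1)) (2^k)"
    using Suc.prems(1) unfolding RCV_def M2 by (auto simp: M_def intro: RC_ext)
  obtain q2 os2 where q2: "length q2 \<le> 10*k*2^k"
     "RCV ((p @ q1) @ q2) os2 (\<lambda>j i. \<Sum>s<2^k. a (2*s+1) i * (z^2)^(j*s)) (2^k)"
    using Suc.IH[OF od zM] by blast
  define E where "E = (\<lambda>j i. \<Sum>s<M. a (2*s) i * (z^2)^(j*s))"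
  define Od where "Od = (\<lambda>j i. \<Sum>s<M. a (2*s+1) i * (z^2)^(j*s))"
  define Inv where "Inv = (\<lambda>p. \<forall>j<M. RC p (os1!j) (E j) \<and> RC p (os2!j) (Od j))"
  define Q where "Q = (\<lambda>p j r. RC p r (\<lambda>i. \<Sum>s<2*M. a s i * z^(j*s)))"
  have I0: "Inv (p @ q1 @ q2)" using q1(2) q2(2) unfolding Inv_def RCV_def E_def Od_def M_def
    by (auto intro: RC_ext[of "p @ q1" _ _ q2, simplified])
  have "\<exists>q rf. length q \<le> (\<Sum>y\<leftarrow>[0..<2*M]. 10) \<and> (\<forall>y\<in>set [0..<2*M]. Q ((p @ q1 @ q2) @ q) y (rf y))"
  proof (rule iter_gen[where Inv=Inv])
    fix pp j assume j: "j \<in> set [0..<2*M]" and I: "Inv pp"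
    have jm: "j mod M < M" using M_def by simp
    obtain q r where qr: "length q = 10" "RC (pp @ q) r (\<lambda>i. E (j mod M) i + z^j * Od (j mod M) i)"
      using cfma[of pp "os2!(j mod M)" "Od (j mod M)" "os1!(j mod M)" "E (j mod M)" "z^j"] I jm
      unfolding Inv_def by blast
    moreover have "(\<lambda>i. E (j mod M) i + z^j * Od (j mod M) i) = (\<lambda>i. \<Sum>s<2*M. a s i * z^(j*s))"
    proof
      fix i
      have "z^(2*M) = 1" using Suc.prems(2) M2 by simp
      from fft_split[OF this, of "\<lambda>s. a s i" j] show "E (j mod M) i + z^j * Od (j mod M) i = (\<Sum>s<2*M. a s i * z^(j*s))"
        unfolding E_def Od_def by (simp add: mult.commute)
    qed
    ultimately show "\<exists>q r. length q \<le> 10 \<and> Q (pp @ q) j r" unfolding Q_def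
      using qr by (intro exI[of _ q] exI[of _ r]) simp
  next
    show "\<And>p q y r. Q p y r \<Longrightarrow> Q (p @ q) y r" unfolding Q_def using RC_ext by blast
    show "\<And>p q. Inv p \<Longrightarrow> Inv (p @ q)" unfolding Inv_def using RC_ext by blast
  qed (rule I0)
  then obtain q3 rf where q3: "length q3 \<le> 10 * (2*M)" "\<forall>j<2*M. Q ((p @ q1 @ q2) @ q3) j (rf j)"
    by (auto simp: sum_list_triv atLeast0LessThan)
  show ?case
  proof (intro exI[of _ "q1 @ q2 @ q3"] exI[of _ "map rf [0..<2*M]"] conjI)
    show "length (q1 @ q2 @ q3) \<le> 10 * Suc k * 2 ^ Suc k"
      using q1(1) q2(1) q3(1) unfolding M_def by (simp add: algebra_simps)
    show "RCV (p @ q1 @ q2 @ q3) (map rf [0..<2 * M]) (\<lambda>j i. \<Sum>s<2 ^ Suc k. a s i * z ^ (j * s)) (2 ^ Suc k)"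
      using q3(2) unfolding RCV_def Q_def M2 by simp
  qed
qed



lemma cis_eq_1_int: "cis x = 1 \<Longrightarrow> \<exists>n::int. x = n * 2 * pi"
proof -
  assume "cis x = 1"
  then have "Re (cis x) = 1" by simp
  then have "cos x = 1" by simp
  then show ?thesis using cos_one_2pi_int by blast
qed

lemma root_prop:
  fixes N s m :: nat
  assumes N: "N > 0" and s: "s < N"
  defines "w \<equiv> cis (2*pi/N)"
  shows "(w^s * cnj w^m)^N = 1" and "w^s * cnj w^m = 1 \<longleftrightarrow> s = m mod N"
proof -
  have u: "w^s * cnj w^m = cis (2*pi*(real s - real m)/N)"
    unfolding w_def by (simp add: DeMoivre cis_cnj cis_mult algebra_simps diff_divide_distrib)
  have "real N * (2*pi*(real s - real m)/N) = 2*pi*(real_of_int (int s - int m))"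
    using N by simp
  then have "(w^s * cnj w^m)^N = cis (2*pi*(real_of_int (int s - int m)))"
    unfolding u DeMoivre by simp
  also have "\<dots> = 1" by (rule cis_multiple_2pi) simp
  finally show "(w^s * cnj w^m)^N = 1" .
  show "w^s * cnj w^m = 1 \<longleftrightarrow> s = m mod N"
  proof
    assume "w^s * cnj w^m = 1"
    then have "cis (2*pi*(real s - real m)/N) = 1" using u by simp
    then obtain n :: int where "2*pi*(real s - real m)/N = real_of_int n*2*pi" using cis_eq_1_int by blast
    then have "2*pi*(real s - real m) = 2*pi*(real_of_int n * real N)" using N by (simp add: field_simps)
    then have "real s - real m = real_of_int n * real N" by simp
    then have "real_of_int (int s) = real_of_int (int m + n * int N)" by simp
    then have "int s = int m + n * int N" by (simp only: of_int_eq_iff)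
    then have "int s mod int N = int m mod int N" by simp
    then have "s mod N = m mod N" by (metis of_nat_eq_iff zmod_int)
    then show "s = m mod N" using s by simp
  next
    assume "s = m mod N"
    then have "m = s + N*(m div N)" by simp
    then have "real m = real s + real N * real (m div N)" by (metis of_nat_add of_nat_mult)
    then have "real s - real m = - (real N * real (m div N))" by simp
    then have "2*pi*(real s - real m)/N = 2*pi*(- (real N * real (m div N)))/N" by simp
    also have "\<dots> = 2*pi*real_of_int (- int (m div N))" using N by simp
    finally have "2*pi*(real s - real m)/N = 2*pi*real_of_int (- int (m div N))" .
    then show "w^s * cnj w^m = 1" unfolding u by (simp only:) (rule cis_multiple_2pi, simp)
  qed
qed

lemma geo_root:
  fixes N s m :: nat
  assumes N: "N > 0" and s: "s < N"
  defines "w \<equiv> cis (2*pi/N)"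
  shows "(\<Sum>j<N. (w^s * cnj w^m)^j) = (if s = m mod N then of_nat N else 0)"
  using root_prop[OF N s, of m] unfolding w_def[symmetric] by (simp add: sum_gp_strict)

lemma corr:
  fixes A B :: "nat \<Rightarrow> complex" and N e :: nat
  assumes N: "N > 0"
  defines "w \<equiv> cis (2*pi/N)"
  shows "(\<Sum>j<N. ((\<Sum>s<N. A s * w^(j*s)) * (\<Sum>t<N. B t * (cnj w)^(j*t))) * (cnj w)^(e*j))
        = of_nat N * (\<Sum>t<N. A ((t+e) mod N) * B t)"
proof -
  have "(\<Sum>j<N. ((\<Sum>s<N. A s * w^(j*s)) * (\<Sum>t<N. B t * (cnj w)^(j*t))) * (cnj w)^(e*j))
      = (\<Sum>j<N. \<Sum>t<N. \<Sum>s<N. A s * B t * (w^s * cnj w^(t+e))^j)"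
    by (simp add: sum_distrib_left sum_distrib_right power_mult_distrib power_add
         power_mult[symmetric] mult.commute mult.left_commute mult.assoc)
  also have "\<dots> = (\<Sum>t<N. \<Sum>j<N. \<Sum>s<N. A s * B t * (w^s * cnj w^(t+e))^j)"
    by (rule sum.swap)
  also have "\<dots> = (\<Sum>t<N. \<Sum>s<N. \<Sum>j<N. A s * B t * (w^s * cnj w^(t+e))^j)"
    by (intro sum.cong refl sum.swap)
  also have "\<dots> = (\<Sum>s<N. \<Sum>t<N. \<Sum>j<N. A s * B t * (w^s * cnj w^(t+e))^j)"
    by (rule sum.swap)
  also have "\<dots> = (\<Sum>s<N. \<Sum>t<N. A s * B t * (\<Sum>j<N. (w^s * cnj w^(t+e))^j))"
    by (simp add: sum_distrib_left)
  also have "\<dots> = (\<Sum>s<N. \<Sum>t<N. A s * B t * (if s = (t+e) mod N then of_nat N else 0))"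
    using geo_root[OF N] unfolding w_def by (intro sum.cong refl) simp
  also have "\<dots> = (\<Sum>t<N. \<Sum>s<N. (if s = (t+e) mod N then of_nat N * (A s * B t) else 0))"
    by (subst sum.swap) (intro sum.cong refl, simp add: mult.commute)
  also have "\<dots> = (\<Sum>t<N. of_nat N * (A ((t+e) mod N) * B t))"
    using N by (intro sum.cong refl) (simp add: sum.delta')
  finally show ?thesis by (simp add: sum_distrib_left mult.assoc)
qed



lemma sum_build: "\<exists>q r. length q = 1 + 2*length js \<and> R (p @ q) r (\<lambda>i. \<Sum>j\<leftarrow>js. snd i j)"
proof (induction js rule: rev_induct)
  case Nil
  show ?case using R_Const[of p 0] by (intro exI[of _ "[Const 0]"] exI[of _ "length p"]) simp
next
  case (snoc j js)
  then obtain q r where qr: "length q = 1 + 2*length js" "R (p @ q) r (\<lambda>i. \<Sum>j\<leftarrow>js. snd i j)" by blast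
  have 1: "R ((p @ q) @ [InX j]) (length (p @ q)) (\<lambda>i. snd i j)" by (rule R_InX)
  have 2: "R (((p @ q) @ [InX j]) @ [Add r (length (p @ q))]) (length ((p @ q) @ [InX j]))
     (\<lambda>i. (\<Sum>j\<leftarrow>js. snd i j) + snd i j)"
    by (rule R_Add[OF R_ext[OF qr(2)] 1])
  show ?case using qr 2
    by (intro exI[of _ "q @ [InX j, Add r (length (p @ q))]"] exI[of _ "length ((p @ q) @ [InX j])"]) simp
qed

lemma Gmath:
  fixes F X :: "nat \<Rightarrow> real"
  assumes A: "finite A" "\<forall>j\<in>A. \<delta> j < n" and N: "2*n \<le> N" and e: "e < n"
  shows "(\<Sum>t<N. F ((t+e) mod N) * (\<Sum>j\<in>{j\<in>A. \<delta> j = t}. X j)) = (\<Sum>j\<in>A. F (e + \<delta> j) * X j)"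
proof -
  have "(\<Sum>t<N. F ((t+e) mod N) * (\<Sum>j\<in>{j\<in>A. \<delta> j = t}. X j))
      = (\<Sum>t<N. \<Sum>j\<in>{j\<in>A. \<delta> j = t}. F (e + \<delta> j) * X j)"
  proof (intro sum.cong refl)
    fix t assume t: "t \<in> {..<N}"
    have "F ((t+e) mod N) * (\<Sum>j\<in>{j\<in>A. \<delta> j = t}. X j) = (\<Sum>j\<in>{j\<in>A. \<delta> j = t}. F ((t+e) mod N) * X j)"
      by (simp add: sum_distrib_left)
    also have "\<dots> = (\<Sum>j\<in>{j\<in>A. \<delta> j = t}. F (e + \<delta> j) * X j)"
    proof (intro sum.cong refl)
      fix j assume "j \<in> {j\<in>A. \<delta> j = t}"
      then have "\<delta> j = t" "\<delta> j < n" using A by auto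
      then have "(t+e) mod N = e + \<delta> j" using N e by simp
      then show "F ((t+e) mod N) * X j = F (e + \<delta> j) * X j" by simp
    qed
    finally show "F ((t+e) mod N) * (\<Sum>j\<in>{j\<in>A. \<delta> j = t}. X j) = (\<Sum>j\<in>{j\<in>A. \<delta> j = t}. F (e + \<delta> j) * X j)" .
  qed
  also have "\<dots> = (\<Sum>j\<in>A. F (e + \<delta> j) * X j)"
    using A N by (intro sum.group) auto
  finally show ?thesis .
qed

lemma sum_len_filter:
  "\<forall>j\<in>set xs. \<delta> j < (N::nat) \<Longrightarrow> (\<Sum>t<N. length (filter (\<lambda>j. \<delta> j = t) xs)) = length xs"
proof (induction xs)
  case Nil then show ?case by simp
next
  case (Cons a xs)
  have "(\<Sum>t<N. length (filter (\<lambda>j. \<delta> j = t) (a # xs))) =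
        (\<Sum>t<N. (if \<delta> a = t then 1 else 0) + length (filter (\<lambda>j. \<delta> j = t) xs))"
    by (intro sum.cong refl) simp
  also have "\<dots> = (\<Sum>t<N. (if \<delta> a = t then 1 else 0)) + length xs" using Cons by (simp add: sum.distrib)
  also have "(\<Sum>t<N. (if \<delta> a = t then 1 else 0)) = (1::nat)" using Cons.prems by (subst sum.delta') auto
  finally show ?case by simp
qed

lemma RC_real:
  "R p r v \<Longrightarrow> R p z0 (\<lambda>_. 0) \<Longrightarrow> RC p (r, z0) (\<lambda>i. complex_of_real (v i))"
  unfolding RC_def by simp

lemma Gmod:
  fixes A :: "nat set" and \<delta> :: "nat \<Rightarrow> nat"
  assumes A: "finite A" "\<forall>j\<in>A. \<delta> j < n" and N: "2*n \<le> 2^k"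
  shows "\<exists>q os. length q \<le> 30*k*2^k + 9*2^k + 2*card A + 2 \<and> length os = n \<and>
     (\<forall>e<n. R (p @ q) (os!e) (\<lambda>i. \<Sum>j\<in>A. fst i (e + \<delta> j) * snd i j))"
proof -
  define N where "N = (2::nat)^k"
  have N0: "N > 0" unfolding N_def by simp
  define w where "w = cis (2*pi/N)"
  have wN: "w^N = 1" unfolding w_def DeMoivre using N0 by simp
  have cwN: "(cnj w)^(2^k) = 1" using wN unfolding N_def by (metis complex_cnj_one complex_cnj_power)
  define xs where "xs = sorted_list_of_set A"
  have xs: "set xs = A" "distinct xs" "length xs = card A" using A unfolding xs_def by auto
  define Bv where "Bv = (\<lambda>t (i::inp). \<Sum>j\<in>{j\<in>A. \<delta> j = t}. snd i j)"
  define p1 where "p1 = p @ [Const 0]"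
  have z0: "R p1 (length p) (\<lambda>_. 0)" unfolding p1_def by (rule R_Const)
  have "\<exists>q rf. length q \<le> (\<Sum>s\<leftarrow>[0..<N]. 1) \<and> (\<forall>s\<in>set [0..<N]. (\<lambda>p s r. R p r (\<lambda>i. fst i s)) (p1 @ q) s (rf s))"
  proof (rule iter_gen[where Inv="\<lambda>_. True"])
    fix pp s
    show "\<exists>q r. length q \<le> 1 \<and> R (pp @ q) r (\<lambda>i. fst i s)"
      using R_InF[of pp s] by (intro exI[of _ "[InF s]"] exI[of _ "length pp"]) simp
  qed (auto intro: R_ext)
  then obtain q2 ra where q2: "length q2 \<le> N" "\<forall>s<N. R (p1 @ q2) (ra s) (\<lambda>i. fst i s)"
    by (auto simp: sum_list_triv atLeast0LessThan)
  define p2 where "p2 = p1 @ q2"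
  have "\<exists>q rf. length q \<le> (\<Sum>t\<leftarrow>[0..<N]. 1 + 2 * length (filter (\<lambda>j. \<delta> j = t) xs)) \<and>
      (\<forall>t\<in>set [0..<N]. (\<lambda>p t r. R p r (Bv t)) (p2 @ q) t (rf t))"
  proof (rule iter_gen[where Inv="\<lambda>_. True"])
    fix pp t assume "t \<in> set [0..<N]"
    obtain q r where qr: "length q = 1 + 2*length (filter (\<lambda>j. \<delta> j = t) xs)"
      "R (pp @ q) r (\<lambda>i. \<Sum>j\<leftarrow>filter (\<lambda>j. \<delta> j = t) xs. snd i j)"
      using sum_build by blast
    have "(\<lambda>i. \<Sum>j\<leftarrow>filter (\<lambda>j. \<delta> j = t) xs. snd i j) = Bv t"
      unfolding Bv_def using xs by (simp add: sum_list_distinct_conv_sum_set)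
    then show "\<exists>q r. length q \<le> 1 + 2 * length (filter (\<lambda>j. \<delta> j = t) xs) \<and> R (pp @ q) r (Bv t)"
      using qr by (intro exI[of _ q] exI[of _ r]) auto
  qed (auto intro: R_ext)
  then obtain q3 rb where q3: "length q3 \<le> (\<Sum>t<N. 1 + 2 * length (filter (\<lambda>j. \<delta> j = t) xs))"
     "\<forall>t<N. R (p2 @ q3) (rb t) (Bv t)"
    by (auto simp: sum_set_upt_conv_sum_list_nat[symmetric] atLeast0LessThan)
  have "(\<Sum>t<N. 1 + 2 * length (filter (\<lambda>j. \<delta> j = t) xs)) = N + 2 * card A"
  proof -
    have "\<forall>j\<in>set xs. \<delta> j < N" using A N xs unfolding N_def by auto
    then have "(\<Sum>t<N. length (filter (\<lambda>j. \<delta> j = t) xs)) = card A" using sum_len_filter[of xs \<delta> N] xs by simp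
    moreover have "(\<Sum>t<N. 1 + 2 * length (filter (\<lambda>j. \<delta> j = t) xs)) = N + 2 * (\<Sum>t<N. length (filter (\<lambda>j. \<delta> j = t) xs))"
      by (simp only: sum.distrib sum_distrib_left[symmetric]) simp
    ultimately show ?thesis by simp
  qed
  with q3 have q3len: "length q3 \<le> N + 2 * card A" by simp
  define p3 where "p3 = p2 @ q3"
  define Ac where "Ac = (\<lambda>s (i::inp). complex_of_real (fst i s))"
  define Bc where "Bc = (\<lambda>t (i::inp). complex_of_real (Bv t i))"
  have ra3: "\<forall>s<N. R p3 (ra s) (\<lambda>i. fst i s)" using q2(2) unfolding p3_def p2_def by (metis R_ext append_assoc)
  have rb3: "\<forall>t<N. R p3 (rb t) (Bv t)" using q3(2) unfolding p3_def by auto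
  have z3: "R p3 (length p) (\<lambda>_. 0)" using R_ext[OF z0, of "q2@q3"] unfolding p3_def p2_def by simp
  have RA: "RCV p3 (map (\<lambda>s. (ra s, length p)) [0..<N]) Ac (2^k)"
    unfolding RCV_def Ac_def N_def[symmetric] using ra3 z3 by (auto intro!: RC_real)
  have RB: "RCV p3 (map (\<lambda>s. (rb s, length p)) [0..<N]) Bc (2^k)"
    unfolding RCV_def Bc_def N_def[symmetric] using rb3 z3 by (auto intro!: RC_real)
  obtain q4 os4 where q4: "length q4 \<le> 10*k*2^k"
    "RCV (p3 @ q4) os4 (\<lambda>j i. \<Sum>s<2^k. Ac s i * w^(j*s)) (2^k)"
    using fft[OF RA, of w] wN unfolding N_def by blast
  define p4 where "p4 = p3 @ q4"
  obtain q5 os5 where q5: "length q5 \<le> 10*k*2^k"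
    "RCV (p4 @ q5) os5 (\<lambda>j i. \<Sum>s<2^k. Bc s i * (cnj w)^(j*s)) (2^k)"
    using fft[OF RCV_ext[OF RB, of q4] cwN] unfolding p4_def by blast
  define p5 where "p5 = p4 @ q5"
  define Pc where "Pc = (\<lambda>j i. (\<Sum>s<N. Ac s i * w^(j*s)) * (\<Sum>t<N. Bc t i * (cnj w)^(j*t)))"
  have "\<exists>q rf. length q \<le> (\<Sum>j\<leftarrow>[0..<N]. 6) \<and> (\<forall>j\<in>set [0..<N]. (\<lambda>p j r. RC p r (Pc j)) (p5 @ q) j (rf j))"
  proof (rule iter_gen[where Inv="\<lambda>p. RCV p os4 (\<lambda>j i. \<Sum>s<2^k. Ac s i * w^(j*s)) (2^k) \<and>
                                   RCV p os5 (\<lambda>j i. \<Sum>s<2^k. Bc s i * (cnj w)^(j*s)) (2^k)"])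
    fix pp j assume j: "j \<in> set [0..<N]" and I: "RCV pp os4 (\<lambda>j i. \<Sum>s<2^k. Ac s i * w^(j*s)) (2^k) \<and>
                                   RCV pp os5 (\<lambda>j i. \<Sum>s<2^k. Bc s i * (cnj w)^(j*s)) (2^k)"
    have a: "RC pp (os4!j) (\<lambda>i. \<Sum>s<N. Ac s i * w^(j*s))" using I j unfolding RCV_def N_def by auto
    have b: "RC pp (os5!j) (\<lambda>i. \<Sum>s<N. Bc s i * (cnj w)^(j*s))" using I j unfolding RCV_def N_def by auto
    obtain q r where "length q = 6" "RC (pp @ q) r (Pc j)"
      using cmul[OF a b] unfolding Pc_def by blast
    then show "\<exists>q r. length q \<le> 6 \<and> RC (pp @ q) r (Pc j)" by (intro exI[of _ q] exI[of _ r]) simp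
  next
    show "RCV p5 os4 (\<lambda>j i. \<Sum>s<2^k. Ac s i * w^(j*s)) (2^k) \<and>
          RCV p5 os5 (\<lambda>j i. \<Sum>s<2^k. Bc s i * (cnj w)^(j*s)) (2^k)"
      using q4(2) q5(2) unfolding p5_def p4_def by (auto intro: RCV_ext[of "p3 @ q4" _ _ _ q5, simplified])
  qed (auto intro: RC_ext RCV_ext)
  then obtain q6 rp where q6: "length q6 \<le> 6*N" "\<forall>j<N. RC (p5 @ q6) (rp j) (Pc j)"
    by (auto simp: sum_list_triv atLeast0LessThan mult.commute)
  define p6 where "p6 = p5 @ q6"
  have RP: "RCV p6 (map rp [0..<N]) Pc (2^k)" using q6(2) unfolding RCV_def p6_def N_def by simp
  obtain q7 os7 where q7: "length q7 \<le> 10*k*2^k"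
    "RCV (p6 @ q7) os7 (\<lambda>e i. \<Sum>j<2^k. Pc j i * (cnj w)^(e*j)) (2^k)"
    using fft[OF RP cwN] by blast
  define p7 where "p7 = p6 @ q7"
  define p8 where "p8 = p7 @ [Const (1 / real N)]"
  have c8: "R p8 (length p7) (\<lambda>_. 1 / real N)" unfolding p8_def by (rule R_Const)
  define Out where "Out = (\<lambda>e (i::inp). \<Sum>j\<in>A. fst i (e + \<delta> j) * snd i j)"
  have "\<exists>q rf. length q \<le> (\<Sum>e\<leftarrow>[0..<n]. 1) \<and> (\<forall>e\<in>set [0..<n]. (\<lambda>p e r. R p r (Out e)) (p8 @ q) e (rf e))"
  proof (rule iter_gen[where Inv="\<lambda>p. R p (length p7) (\<lambda>_. 1 / real N) \<and>
                     RCV p os7 (\<lambda>e i. \<Sum>j<2^k. Pc j i * (cnj w)^(e*j)) (2^k)"])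
    fix pp e assume e: "e \<in> set [0..<n]" and I: "R pp (length p7) (\<lambda>_. 1 / real N) \<and>
                     RCV pp os7 (\<lambda>e i. \<Sum>j<2^k. Pc j i * (cnj w)^(e*j)) (2^k)"
    have en: "e < n" "e < N" using e N unfolding N_def by auto
    have r7: "R pp (fst (os7!e)) (\<lambda>i. Re (\<Sum>j<2^k. Pc j i * (cnj w)^(e*j)))"
      using I en unfolding RCV_def RC_def N_def by auto
    have val: "(\<lambda>i. 1 / real N * Re (\<Sum>j<2^k. Pc j i * (cnj w)^(e*j))) = Out e"
    proof
      fix i :: inp
      have "(\<Sum>j<2^k. Pc j i * (cnj w)^(e*j)) = of_nat N * (\<Sum>t<N. Ac ((t+e) mod N) i * Bc t i)"
        using corr[OF N0, of "\<lambda>s. Ac s i" "\<lambda>t. Bc t i" e] unfolding Pc_def w_def N_def by simp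
      also have "\<dots> = of_real (real N * (\<Sum>t<N. fst i ((t+e) mod N) * Bv t i))"
        unfolding Ac_def Bc_def by simp
      finally have "1 / real N * Re (\<Sum>j<2^k. Pc j i * (cnj w)^(e*j)) = (\<Sum>t<N. fst i ((t+e) mod N) * Bv t i)"
        using N0 by simp
      also have "\<dots> = Out e i"
        unfolding Bv_def Out_def using Gmath[OF A _ en(1), of N "fst i" "snd i"] N unfolding N_def by simp
      finally show "1 / real N * Re (\<Sum>j<2^k. Pc j i * (cnj w)^(e*j)) = Out e i" .
    qed
    have "R (pp @ [Mul (length p7) (fst (os7!e))]) (length pp) (Out e)"
      using R_Mul[OF conjunct1[OF I] r7] val by simp
    then show "\<exists>q r. length q \<le> 1 \<and> R (pp @ q) r (Out e)" by (intro exI[of _ "[Mul (length p7) (fst (os7!e))]"]) auto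
  next
    show "R p8 (length p7) (\<lambda>_. 1 / real N) \<and> RCV p8 os7 (\<lambda>e i. \<Sum>j<2^k. Pc j i * (cnj w)^(e*j)) (2^k)"
      using c8 RCV_ext[OF q7(2), of "[Const (1 / real N)]"] unfolding p8_def p7_def by simp
  qed (auto intro: R_ext RCV_ext)
  then obtain q9 ro where q9: "length q9 \<le> n" "\<forall>e<n. R (p8 @ q9) (ro e) (Out e)"
    by (auto simp: sum_list_triv atLeast0LessThan)
  have "p8 @ q9 = p @ ([Const 0] @ q2 @ q3 @ q4 @ q5 @ q6 @ q7 @ [Const (1 / real N)] @ q9)"
    unfolding p8_def p7_def p6_def p5_def p4_def p3_def p2_def p1_def by simp
  moreover have "length ([Const 0] @ q2 @ q3 @ q4 @ q5 @ q6 @ q7 @ [Const (1 / real N)] @ q9) \<le> 30*k*2^k + 9*2^k + 2*card A + 2"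
    using q2(1) q3len q4(1) q5(1) q6(1) q7(1) q9(1) N unfolding N_def by simp
  ultimately show ?thesis using q9(2) unfolding Out_def
    by (intro exI[of _ "[Const 0] @ q2 @ q3 @ q4 @ q5 @ q6 @ q7 @ [Const (1 / real N)] @ q9"]
         exI[of _ "map ro [0..<n]"]) auto
qed



definition clog :: "nat \<Rightarrow> nat" where "clog n = (LEAST k. n \<le> 2^k)"

lemma clog_ge: "n \<le> 2^(clog n)"
  unfolding clog_def by (rule LeastI[of _ n]) (simp add: less_imp_le)

lemma clog_le: "n \<le> 2^h \<Longrightarrow> clog n \<le> h"
  unfolding clog_def by (rule Least_le)

lemma clog_lt: assumes "n \<ge> 1" shows "2^(clog n) < 2*n"
proof (cases "clog n")
  case 0 then show ?thesis using assms by simp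
next
  case (Suc m)
  then have "\<not> n \<le> 2^m" unfolding clog_def by (metis Suc_n_not_le_n Least_le)
  then show ?thesis using Suc by simp
qed

lemma Gmod2:
  fixes A :: "nat set" and \<delta> :: "nat \<Rightarrow> nat"
  assumes A: "finite A" "A \<noteq> {}" "card A \<le> 2^h" "\<forall>j\<in>A. \<delta> j \<le> card A"
  shows "\<exists>q os. length q \<le> 600 * card A * (h+1) \<and> length os = card A + 1 \<and>
     (\<forall>e\<le>card A. R (p @ q) (os!e) (\<lambda>i. \<Sum>j\<in>A. fst i (e + \<delta> j) * snd i j))"
proof -
  define a where "a = card A"
  have a1: "a \<ge> 1" using A unfolding a_def by (simp add: Suc_leI card_gt_0_iff)
  define k where "k = clog (2*(a+1))"
  have N: "2*(a+1) \<le> 2^k" unfolding k_def by (rule clog_ge)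
  have K: "2^k < 4*(a+1)" unfolding k_def using clog_lt[of "2*(a+1)"] by simp
  then have K8: "2^k \<le> 8*a" using a1 by simp
  have "2*(a+1) \<le> 2^(h+2)" using A(3) a1 unfolding a_def by simp
  then have kh: "k \<le> h+2" unfolding k_def by (rule clog_le)
  obtain q os where qo: "length q \<le> 30*k*2^k + 9*2^k + 2*card A + 2" "length os = a+1"
     "\<forall>e<a+1. R (p @ q) (os!e) (\<lambda>i. \<Sum>j\<in>A. fst i (e + \<delta> j) * snd i j)"
    using Gmod[OF A(1) _ N, of \<delta> p] A(4) unfolding a_def by force
  have "k * 2^k \<le> (h+2) * (8*a)" using kh K8 by (rule mult_le_mono)
  then have "30*k*2^k + 9*2^k + 2*card A + 2 \<le> 30*((h+2)*(8*a)) + 9*(8*a) + 2*a + 2"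
    using K8 unfolding a_def by linarith
  also have "\<dots> \<le> 600 * a * (h+1)" using a1 by (simp add: algebra_simps)
  finally show ?thesis using qo unfolding a_def by (intro exI[of _ q] exI[of _ os]) auto
qed

inductive good :: "(nat \<Rightarrow> nat \<Rightarrow> nat) \<Rightarrow> nat set \<Rightarrow> bool" for D where
  goodI: "finite S \<Longrightarrow> c \<in> S \<Longrightarrow>
    (\<forall>T\<in>set Ts. good D T \<and> T \<subseteq> S \<and> 2 * card T \<le> card S \<and>
        (\<forall>i\<in>T. \<forall>j\<in>S - T. D i j = D i c + D c j) \<and> (\<forall>i\<in>T. D i c \<le> card T) \<and> (\<forall>j\<in>T. D c j \<le> card T)) \<Longrightarrow>
    (\<forall>i\<in>S - {c}. \<exists>T\<in>set Ts. i \<in> T) \<Longrightarrow>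
    (\<Sum>T\<leftarrow>Ts. card T) \<le> card S \<Longrightarrow>
    (\<forall>j\<in>S. D c j \<le> card S) \<Longrightarrow> good D S"

lemma good_ne: "good D S \<Longrightarrow> finite S \<and> S \<noteq> {}"
  by (induction rule: good.induct) auto

definition outv :: "(nat \<Rightarrow> nat \<Rightarrow> nat) \<Rightarrow> nat set \<Rightarrow> nat \<Rightarrow> inp \<Rightarrow> real" where
  "outv D S i = (\<lambda>v. \<Sum>j\<in>S. fst v (D i j) * snd v j)"

lemma split_math:
  fixes F X :: "nat \<Rightarrow> real"
  assumes "finite S" "T \<subseteq> S" "\<forall>j\<in>S - T. D i j = D i c + D c j"
  shows "(\<Sum>j\<in>S. F (D i j) * X j) = (\<Sum>j\<in>T. F (D i j) * X j) + ((\<Sum>j\<in>S. F (D i c + D c j) * X j) - (\<Sum>j\<in>T. F (D i c + D c j) * X j))"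
proof -
  have fT: "finite T" using assms finite_subset by blast
  have "(\<Sum>j\<in>S. F (D i j) * X j) = (\<Sum>j\<in>S - T. F (D i j) * X j) + (\<Sum>j\<in>T. F (D i j) * X j)"
    using sum.subset_diff[OF assms(2,1)] by simp
  also have "(\<Sum>j\<in>S - T. F (D i j) * X j) = (\<Sum>j\<in>S - T. F (D i c + D c j) * X j)"
    using assms(3) by (intro sum.cong) auto
  also have "\<dots> = (\<Sum>j\<in>S. F (D i c + D c j) * X j) - (\<Sum>j\<in>T. F (D i c + D c j) * X j)"
    using sum_diff[OF assms(1,2)] by simp
  finally show ?thesis by simp
qed

abbreviation "BB \<equiv> (1210::nat)"

lemma rec_build:
  "good D S \<Longrightarrow> \<forall>h p. card S \<le> 2^h \<longrightarrow>
     (\<exists>q out. length q \<le> BB * card S * (h+1)^2 \<and> (\<forall>i\<in>S. R (p @ q) (out i) (outv D S i)))"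
proof (induction rule: good.induct)
  case (goodI S c Ts)
  show ?case
  proof (intro allI impI)
    fix h p assume hS: "card S \<le> 2^h"
    define s where "s = card S"
    have "\<exists>q rf. length q \<le> (\<Sum>T\<leftarrow>Ts. (BB * h^2) * card T) \<and>
        (\<forall>T\<in>set Ts. (\<lambda>p T r. \<forall>i\<in>T. R p (r i) (outv D T i)) (p @ q) T (rf T))"
    proof (rule iter_gen[where Inv="\<lambda>_. True"])
      fix pp T assume T: "T \<in> set Ts"
      then have gT: "good D T" "2 * card T \<le> card S"
        and IH: "\<forall>h p. card T \<le> 2^h \<longrightarrow> (\<exists>q out. length q \<le> BB * card T * (h+1)^2 \<and> (\<forall>i\<in>T. R (p @ q) (out i) (outv D T i)))"
        using goodI.IH by auto
      have "card T \<ge> 1" using good_ne[OF gT(1)] by (simp add: Suc_leI card_gt_0_iff)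
      then have h1: "h \<ge> 1" using gT(2) hS by (cases h) auto
      have "2 * card T \<le> 2 * 2^(h-1)" using gT(2) hS h1 by (metis le_trans power_eq_if not_one_le_zero)
      then have "card T \<le> 2^(h-1)" by simp
      then obtain q out where "length q \<le> BB * card T * (h-1+1)^2" "\<forall>i\<in>T. R (pp @ q) (out i) (outv D T i)"
        using IH by blast
      then show "\<exists>q r. length q \<le> (BB * h^2) * card T \<and> (\<lambda>p T r. \<forall>i\<in>T. R p (r i) (outv D T i)) (pp @ q) T r"
        using h1 by (intro exI[of _ q] exI[of _ out]) (simp add: algebra_simps)
    qed (auto intro: R_ext)
    then obtain q1 rT where q1: "length q1 \<le> (BB * h^2) * (\<Sum>T\<leftarrow>Ts. card T)"
        "\<forall>T\<in>set Ts. \<forall>i\<in>T. R (p @ q1) (rT T i) (outv D T i)"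
      by (auto simp: sum_list_const_mult)
    define p1 where "p1 = p @ q1"
    define GSv where "GSv = (\<lambda>e (v::inp). \<Sum>j\<in>S. fst v (e + D c j) * snd v j)"
    obtain q2 gS where q2: "length q2 \<le> 600 * s * (h+1)" "\<forall>e\<le>s. R (p1 @ q2) (gS!e) (GSv e)"
      using Gmod2[of S h "D c" p1] goodI.hyps(1,2,5) hS unfolding GSv_def s_def by auto
    define p2 where "p2 = p1 @ q2"
    define GTv where "GTv = (\<lambda>T e (v::inp). \<Sum>j\<in>T. fst v (e + D c j) * snd v j)"
    have "\<exists>q rf. length q \<le> (\<Sum>T\<leftarrow>Ts. (600 * (h+1)) * card T) \<and>
        (\<forall>T\<in>set Ts. (\<lambda>p T r. \<forall>e\<le>card T. R p (r!e) (GTv T e)) (p2 @ q) T (rf T))"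
    proof (rule iter_gen[where Inv="\<lambda>_. True"])
      fix pp T assume T: "T \<in> set Ts"
      then have gT: "good D T" "T \<subseteq> S" "\<forall>j\<in>T. D c j \<le> card T"
        using goodI.IH by auto
      have "card T \<le> card S" using gT(2) goodI.hyps(1) by (rule card_mono[rotated])
      then have "card T \<le> 2^h" using hS by simp
      then obtain q os where "length q \<le> 600 * card T * (h+1)" "\<forall>e\<le>card T. R (pp @ q) (os!e) (GTv T e)"
        using Gmod2[of T h "D c" pp] good_ne[OF gT(1)] gT(3) unfolding GTv_def by auto
      then show "\<exists>q r. length q \<le> (600 * (h+1)) * card T \<and> (\<lambda>p T r. \<forall>e\<le>card T. R p (r!e) (GTv T e)) (pp @ q) T r"
        by (intro exI[of _ q] exI[of _ os]) (simp add: algebra_simps)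
    qed (auto intro: R_ext)
    then obtain q3 gT where q3: "length q3 \<le> (600 * (h+1)) * (\<Sum>T\<leftarrow>Ts. card T)"
        "\<forall>T\<in>set Ts. \<forall>e\<le>card T. R (p2 @ q3) (gT T!e) (GTv T e)"
      by (auto simp: sum_list_const_mult)
    define p3 where "p3 = p2 @ q3"
    define Inv where "Inv = (\<lambda>pp. (\<forall>T\<in>set Ts. \<forall>i\<in>T. R pp (rT T i) (outv D T i)) \<and>
        (\<forall>e\<le>s. R pp (gS!e) (GSv e)) \<and> (\<forall>T\<in>set Ts. \<forall>e\<le>card T. R pp (gT T!e) (GTv T e)))"
    have I3: "Inv p3" unfolding Inv_def p3_def p2_def p1_def using q1(2) q2(2) q3(2)
      unfolding p1_def p2_def by (auto intro: R_ext[of "p @ q1" _ _ "q2 @ q3", simplified] R_ext[of "p @ q1 @ q2" _ _ q3, simplified])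
    have "\<exists>q rf. length q \<le> (\<Sum>i\<leftarrow>sorted_list_of_set S. 2) \<and>
        (\<forall>i\<in>set (sorted_list_of_set S). (\<lambda>p i r. R p r (outv D S i)) (p3 @ q) i (rf i))"
    proof (rule iter_gen[where Inv=Inv])
      fix pp i assume i: "i \<in> set (sorted_list_of_set S)" and I: "Inv pp"
      have iS: "i \<in> S" using i goodI.hyps(1) by simp
      show "\<exists>q r. length q \<le> 2 \<and> R (pp @ q) r (outv D S i)"
      proof (cases "i = c")
        case True
        have "R pp (gS!0) (GSv 0)" using I unfolding Inv_def by auto
        moreover have "GSv 0 = outv D S i" unfolding GSv_def outv_def True by simp
        ultimately show ?thesis by (intro exI[of _ "[]"] exI[of _ "gS!0"]) simp
      next
        case False
        then obtain T where T: "T \<in> set Ts" "i \<in> T" using goodI.hyps(3) iS by blast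
        then have P: "T \<subseteq> S" "\<forall>j\<in>S - T. D i j = D i c + D c j" "D i c \<le> card T"
          using goodI.IH by auto
        have "card T \<le> s" unfolding s_def using P(1) goodI.hyps(1) by (rule card_mono[rotated])
        then have r1: "R pp (rT T i) (outv D T i)" and r2: "R pp (gS!(D i c)) (GSv (D i c))"
          and r3: "R pp (gT T!(D i c)) (GTv T (D i c))"
          using I T P(3) unfolding Inv_def by auto
        have 1: "R (pp @ [Add (rT T i) (gS!(D i c))]) (length pp) (\<lambda>v. outv D T i v + GSv (D i c) v)"
          by (rule R_Add[OF r1 r2])
        have 2: "R ((pp @ [Add (rT T i) (gS!(D i c))]) @ [Sub (length pp) (gT T!(D i c))])
           (length (pp @ [Add (rT T i) (gS!(D i c))])) (\<lambda>v. outv D T i v + GSv (D i c) v - GTv T (D i c) v)"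
          by (rule R_Sub[OF 1 R_ext[OF r3]])
        have "(\<lambda>v. outv D T i v + GSv (D i c) v - GTv T (D i c) v) = outv D S i"
        proof
          fix v :: inp
          show "outv D T i v + GSv (D i c) v - GTv T (D i c) v = outv D S i v"
            unfolding outv_def GSv_def GTv_def
            using split_math[OF goodI.hyps(1) P(1,2), of "fst v" "snd v"] by simp
        qed
        then show ?thesis using 2
          by (intro exI[of _ "[Add (rT T i) (gS!(D i c)), Sub (length pp) (gT T!(D i c))]"]
               exI[of _ "length (pp @ [Add (rT T i) (gS!(D i c))])"]) simp
      qed
    next
      show "\<And>p q i r. R p r (outv D S i) \<Longrightarrow> R (p @ q) r (outv D S i)" by (rule R_ext)
      show "\<And>p q. Inv p \<Longrightarrow> Inv (p @ q)" unfolding Inv_def by (auto intro: R_ext)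
    qed (rule I3)
    then obtain q4 ro where q4: "length q4 \<le> 2 * s" "\<forall>i\<in>S. R (p3 @ q4) (ro i) (outv D S i)"
      using goodI.hyps(1) by (auto simp: sum_list_triv s_def mult.commute)
    have sumT: "(\<Sum>T\<leftarrow>Ts. card T) \<le> s" using goodI.hyps(4) unfolding s_def .
    have L1: "length q1 \<le> BB * h^2 * s" using q1(1) sumT by (meson le_trans mult_le_mono2)
    have L3: "length q3 \<le> 600 * (h+1) * s" using q3(1) sumT by (meson le_trans mult_le_mono2)
    have "length (q1 @ q2 @ q3 @ q4) \<le> BB * h^2 * s + 600 * s * (h+1) + 600 * (h+1) * s + 2 * s"
      using L1 q2(1) L3 q4(1) by simp
    also have "\<dots> \<le> BB * s * (h+1)^2" by (simp add: power2_eq_square algebra_simps)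
    finally show "\<exists>q out. length q \<le> BB * card S * (h+1)^2 \<and> (\<forall>i\<in>S. R (p @ q) (out i) (outv D S i))"
      using q4(2) unfolding s_def p3_def p2_def p1_def
      by (intro exI[of _ "q1 @ q2 @ q3 @ q4"] exI[of _ ro]) simp
  qed
qed



fun wk :: "nat set set \<Rightarrow> nat list \<Rightarrow> bool" where
  "wk E [] = False"
| "wk E [a] = True"
| "wk E (a # b # ws) = ({a, b} \<in> E \<and> wk E (b # ws))"

lemma is_walk_Cons2: "is_walk E (a # b # ws) \<longleftrightarrow> {a, b} \<in> E \<and> is_walk E (b # ws)"
proof
  assume h: "is_walk E (a # b # ws)"
  then have hk: "\<forall>k. Suc k < length (a # b # ws) \<longrightarrow> {(a # b # ws) ! k, (a # b # ws) ! Suc k} \<in> E"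
    unfolding is_walk_def by blast
  have "Suc 0 < length (a # b # ws)" by simp
  then have "{(a # b # ws) ! 0, (a # b # ws) ! Suc 0} \<in> E" using hk by blast
  then have "{a, b} \<in> E" by simp
  moreover have "is_walk E (b # ws)" unfolding is_walk_def
  proof (intro conjI allI impI)
    fix k assume "Suc k < length (b # ws)"
    moreover have "\<forall>k. Suc k < length (a # b # ws) \<longrightarrow> {(a # b # ws) ! k, (a # b # ws) ! Suc k} \<in> E"
      using h unfolding is_walk_def by blast
    moreover have "Suc (Suc k) < length (a # b # ws)" using \<open>Suc k < length (b # ws)\<close> by simp
    ultimately have "{(a # b # ws) ! Suc k, (a # b # ws) ! Suc (Suc k)} \<in> E" by blast
    then show "{(b # ws) ! k, (b # ws) ! Suc k} \<in> E" by simp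
  qed simp
  ultimately show "{a, b} \<in> E \<and> is_walk E (b # ws)" by simp
next
  assume h: "{a, b} \<in> E \<and> is_walk E (b # ws)"
  show "is_walk E (a # b # ws)" unfolding is_walk_def
  proof (intro conjI allI impI)
    fix k assume k: "Suc k < length (a # b # ws)"
    show "{(a # b # ws) ! k, (a # b # ws) ! Suc k} \<in> E"
    proof (cases k)
      case 0 then show ?thesis using h by simp
    next
      case (Suc m)
      then show ?thesis using h k unfolding is_walk_def by simp
    qed
  qed simp
qed

lemma is_walk_wk: "is_walk E ws = wk E ws"
  by (induction E ws rule: wk.induct) (auto simp: is_walk_Cons2, auto simp: is_walk_def)

lemma wk_ne: "wk E ws \<Longrightarrow> ws \<noteq> []" by auto

lemma wk_append: "wk E (xs @ [a]) \<Longrightarrow> wk E (a # ys) \<Longrightarrow> wk E (xs @ a # ys)"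
proof (induction xs)
  case Nil then show ?case by simp
next
  case (Cons x xs)
  then show ?case by (cases xs) auto
qed

lemma wk_append': "wk E (xs @ a # ys) \<Longrightarrow> wk E (xs @ [a]) \<and> wk E (a # ys)"
proof (induction xs)
  case Nil then show ?case by simp
next
  case (Cons x xs)
  then show ?case by (cases xs) auto
qed

lemma wk_rev: "wk E ws \<Longrightarrow> wk E (rev ws)"
proof (induction E ws rule: wk.induct)
  case (3 E a b ws)
  then have "wk E (rev ws @ [b])" "{b, a} \<in> E" by (auto simp: insert_commute)
  then show ?case using wk_append[of E "rev ws" b "[a]"] by simp
qed auto

definition conn :: "nat set set \<Rightarrow> nat set \<Rightarrow> nat \<Rightarrow> nat \<Rightarrow> bool" where
  "conn E A a b \<longleftrightarrow> (\<exists>ws. wk E ws \<and> hd ws = a \<and> last ws = b \<and> set ws \<subseteq> A)"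

lemma conn_refl: "a \<in> A \<Longrightarrow> conn E A a a"
  unfolding conn_def by (intro exI[of _ "[a]"]) auto

lemma conn_mem: "conn E A a b \<Longrightarrow> a \<in> A \<and> b \<in> A"
  unfolding conn_def using hd_in_set last_in_set wk_ne by blast

lemma conn_mono: "conn E A a b \<Longrightarrow> A \<subseteq> B \<Longrightarrow> conn E B a b"
  unfolding conn_def by blast

lemma conn_sym: "conn E A a b \<Longrightarrow> conn E A b a"
proof -
  assume "conn E A a b"
  then obtain ws where ws: "wk E ws" "hd ws = a" "last ws = b" "set ws \<subseteq> A" unfolding conn_def by blast
  then have "ws \<noteq> []" by auto
  then show ?thesis unfolding conn_def using ws
    by (intro exI[of _ "rev ws"]) (simp add: wk_rev hd_rev last_rev)
qed

lemma conn_trans: "conn E A a b \<Longrightarrow> conn E A b c \<Longrightarrow> conn E A a c"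
proof -
  assume "conn E A a b" "conn E A b c"
  then obtain xs ys where xs: "wk E xs" "hd xs = a" "last xs = b" "set xs \<subseteq> A"
    and ys: "wk E ys" "hd ys = b" "last ys = c" "set ys \<subseteq> A" unfolding conn_def by blast
  obtain xs' where xs': "xs = xs' @ [b]" using xs(1,3) wk_ne by (metis append_butlast_last_id)
  obtain ys' where ys': "ys = b # ys'" using ys(1,2) wk_ne by (metis list.collapse)
  have "wk E (xs' @ b # ys')" using wk_append xs(1) ys(1) xs' ys' by simp
  moreover have "hd (xs' @ b # ys') = a" using xs(2) xs' by (cases xs') auto
  moreover have "last (xs' @ b # ys') = c" using ys(3) ys' by (cases ys') auto
  moreover have "set (xs' @ b # ys') \<subseteq> A" using xs(4) ys(4) xs' ys' by auto
  ultimately show ?thesis unfolding conn_def by blast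
qed

lemma conn_edge: "{a, b} \<in> E \<Longrightarrow> a \<in> A \<Longrightarrow> b \<in> A \<Longrightarrow> conn E A a b"
  unfolding conn_def by (intro exI[of _ "[a, b]"]) auto

lemma conn_cons_walk:
  "wk E (a # ws) \<Longrightarrow> set (a # ws) \<subseteq> A \<Longrightarrow> conn E A a (last (a # ws))"
  unfolding conn_def by (intro exI[of _ "a # ws"]) auto

lemma first_hit_walk:
  "wk E ws \<Longrightarrow> hd ws = a \<Longrightarrow> c \<in> set ws \<Longrightarrow> a \<noteq> c \<Longrightarrow> set ws \<subseteq> A \<Longrightarrow>
   \<exists>b. {b, c} \<in> E \<and> conn E (A - {c}) a b"
proof (induction ws arbitrary: a)
  case Nil then show ?case by simp
next
  case (Cons x ws)
  then have x: "x = a" by simp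
  then obtain b' ws' where ws: "ws = b' # ws'" using Cons by (cases ws) auto
  have e: "{a, b'} \<in> E" and w: "wk E (b' # ws')" using Cons.prems(1) x ws by auto
  show ?case
  proof (cases "b' = c")
    case True
    then show ?thesis using e Cons.prems x by (intro exI[of _ a]) (auto intro: conn_refl)
  next
    case False
    then obtain b where b: "{b, c} \<in> E" "conn E (A - {c}) b' b"
      using Cons.IH[of b'] w ws Cons.prems by auto
    have "conn E (A - {c}) a b'" using e Cons.prems x ws False by (intro conn_edge) auto
    then show ?thesis using b conn_trans by blast
  qed
qed

lemma first_hit: "conn E A a c \<Longrightarrow> a \<noteq> c \<Longrightarrow> \<exists>b. {b, c} \<in> E \<and> conn E (A - {c}) a b"
proof -
  assume a: "conn E A a c" "a \<noteq> c"
  then obtain ws where ws: "wk E ws" "hd ws = a" "last ws = c" "set ws \<subseteq> A" unfolding conn_def by blast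
  then have "c \<in> set ws" using wk_ne last_in_set by blast
  then show ?thesis using first_hit_walk[OF ws(1,2) _ a(2) ws(4)] by blast
qed

definition compo :: "nat set set \<Rightarrow> nat set \<Rightarrow> nat \<Rightarrow> nat set" where
  "compo E A a = {b. conn E A a b}"

lemma comp_eq: "conn E A a x \<Longrightarrow> compo E A x = compo E A a"
proof -
  assume h: "conn E A a x"
  have "conn E A x y \<longleftrightarrow> conn E A a y" for y
    using h conn_trans[of E A a x y] conn_trans[of E A x a y] conn_sym[OF h] by blast
  then show ?thesis unfolding compo_def by blast
qed

lemma comp_sub: "compo E A a \<subseteq> A"
  unfolding compo_def using conn_mem by blast

lemma comp_self: "a \<in> A \<Longrightarrow> a \<in> compo E A a"
  unfolding compo_def by (simp add: conn_refl)

lemma conn_comp_walk: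
  "wk E (a # ws) \<Longrightarrow> set (a # ws) \<subseteq> A \<Longrightarrow> conn E (compo E A a) a (last (a # ws))"
proof (induction ws arbitrary: a)
  case Nil
  then have "a \<in> A" by simp
  then show ?case using conn_refl comp_self by simp
next
  case (Cons b ws)
  have e: "{a, b} \<in> E" and w: "wk E (b # ws)" using Cons.prems(1) by simp_all
  have ab: "conn E A a b" using e Cons.prems(2) by (intro conn_edge) auto
  have "conn E (compo E A b) b (last (b # ws))" using Cons.IH[OF w] Cons.prems(2) by simp
  then have 1: "conn E (compo E A a) b (last (b # ws))" using comp_eq[OF ab] by simp
  have "a \<in> compo E A a" "b \<in> compo E A a" using ab conn_mem[OF ab] comp_self unfolding compo_def by auto
  then have "conn E (compo E A a) a b" using e by (intro conn_edge)
  then show ?case using conn_trans[OF _ 1] by simp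
qed

lemma conn_comp: "conn E A a b \<Longrightarrow> conn E (compo E A a) a b"
proof -
  assume "conn E A a b"
  then obtain ws where ws: "wk E ws" "hd ws = a" "last ws = b" "set ws \<subseteq> A" unfolding conn_def by blast
  then obtain ws' where "ws = a # ws'" by (cases ws) auto
  then show ?thesis using conn_comp_walk[of E a ws' A] ws by simp
qed



lemma dist_le: "wk E ws \<Longrightarrow> hd ws = i \<Longrightarrow> last ws = j \<Longrightarrow> tree_dist E i j \<le> length ws - 1"
proof -
  assume w: "wk E ws" "hd ws = i" "last ws = j"
  then have "length ws = Suc (length ws - 1)" by (cases ws) auto
  then have "\<exists>ws'. is_walk E ws' \<and> hd ws' = i \<and> last ws' = j \<and> length ws' = Suc (length ws - 1)"
    using w by (auto simp: is_walk_wk)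
  then show ?thesis unfolding tree_dist_def by (rule Least_le)
qed

lemma dist_ex: "conn E A i j \<Longrightarrow> \<exists>ws. wk E ws \<and> hd ws = i \<and> last ws = j \<and> length ws = Suc (tree_dist E i j)"
proof -
  assume "conn E A i j"
  then obtain ws where w: "wk E ws" "hd ws = i" "last ws = j" unfolding conn_def by blast
  then have "length ws = Suc (length ws - 1)" by (cases ws) auto
  then have "\<exists>n ws. is_walk E ws \<and> hd ws = i \<and> last ws = j \<and> length ws = Suc n"
    using w by (auto simp: is_walk_wk)
  then have "\<exists>ws. is_walk E ws \<and> hd ws = i \<and> last ws = j \<and> length ws = Suc (tree_dist E i j)"
    unfolding tree_dist_def by (rule LeastI_ex)
  then show ?thesis by (simp add: is_walk_wk)
qed

lemma distinct_walk:
  "wk E (a # ws) \<Longrightarrow> \<exists>ds. wk E ds \<and> hd ds = a \<and> last ds = last (a # ws) \<and> distinct ds \<and> set ds \<subseteq> set (a # ws)"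
proof (induction ws arbitrary: a)
  case Nil then show ?case by (intro exI[of _ "[a]"]) simp
next
  case (Cons b ws)
  have e: "{a, b} \<in> E" and w: "wk E (b # ws)" using Cons.prems by simp_all
  obtain ds where ds: "wk E ds" "hd ds = b" "last ds = last (b # ws)" "distinct ds" "set ds \<subseteq> set (b # ws)"
    using Cons.IH[OF w] by blast
  show ?case
  proof (cases "a \<in> set ds")
    case True
    then obtain xs ys where s: "ds = xs @ a # ys" by (meson split_list)
    have "wk E (a # ys)" using wk_append'[of E xs a ys] ds(1) s by simp
    moreover have "last (a # ys) = last ds" using s by simp
    moreover have "distinct (a # ys)" using ds(4) s by simp
    moreover have "set (a # ys) \<subseteq> set (a # b # ws)" using ds(5) s by auto
    ultimately show ?thesis using ds(3) by (intro exI[of _ "a # ys"]) simp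
  next
    case False
    obtain ds' where ds': "ds = b # ds'" using ds(1,2) by (cases ds) auto
    have "wk E (a # ds)" using e ds(1) ds' by simp
    then show ?thesis using ds False ds' by (intro exI[of _ "a # ds"]) auto
  qed
qed

lemma dist_lt_card: "conn E A a b \<Longrightarrow> finite A \<Longrightarrow> tree_dist E a b < card A"
proof -
  assume c: "conn E A a b" and fA: "finite A"
  then obtain ws where w: "wk E ws" "hd ws = a" "last ws = b" "set ws \<subseteq> A" unfolding conn_def by blast
  then obtain ws' where ws': "ws = a # ws'" by (cases ws) auto
  obtain ds where ds: "wk E ds" "hd ds = a" "last ds = b" "distinct ds" "set ds \<subseteq> A"
    using distinct_walk[of E a ws'] w ws' by auto
  have "length ds = card (set ds)" using ds(4) by (simp add: distinct_card)
  also have "\<dots> \<le> card A" using ds(5) fA by (rule card_mono[rotated])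
  finally have "length ds \<le> card A" .
  moreover have "ds \<noteq> []" using ds(1) by auto
  moreover have "tree_dist E a b \<le> length ds - 1" using dist_le[OF ds(1-3)] .
  ultimately show ?thesis by (cases ds) auto
qed

lemma dist_self: "tree_dist E c c = 0"
  using dist_le[of E "[c]" c c] by simp

lemma dist_sep:
  assumes c: "conn E UNIV i j" and sep: "\<forall>ws. wk E ws \<and> hd ws = i \<and> last ws = j \<longrightarrow> c \<in> set ws"
  shows "tree_dist E i j = tree_dist E i c + tree_dist E c j"
proof -
  obtain ws where ws: "wk E ws" "hd ws = i" "last ws = j" "length ws = Suc (tree_dist E i j)"
    using dist_ex[OF c] by blast
  have "c \<in> set ws" using sep ws by blast
  then obtain xs ys where s: "ws = xs @ c # ys" by (meson split_list)
  have w1: "wk E (xs @ [c])" and w2: "wk E (c # ys)" using wk_append'[of E xs c ys] ws(1) s by auto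
  have h1: "hd (xs @ [c]) = i" using ws(2) s by (cases xs) auto
  have l2: "last (c # ys) = j" using ws(3) s by (cases ys) auto
  have d1: "tree_dist E i c \<le> length xs" using dist_le[OF w1 h1] by simp
  have d2: "tree_dist E c j \<le> length ys" using dist_le[OF w2 _ l2] by simp
  have ge: "tree_dist E i c + tree_dist E c j \<le> tree_dist E i j" using d1 d2 ws(4) s by simp
  have c1: "conn E UNIV i c" unfolding conn_def using w1 h1 by (intro exI[of _ "xs @ [c]"]) simp
  have c2: "conn E UNIV c j" unfolding conn_def using w2 l2 by (intro exI[of _ "c # ys"]) simp
  obtain u1 where u1: "wk E u1" "hd u1 = i" "last u1 = c" "length u1 = Suc (tree_dist E i c)"
    using dist_ex[OF c1] by blast
  obtain u2 where u2: "wk E u2" "hd u2 = c" "last u2 = j" "length u2 = Suc (tree_dist E c j)"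
    using dist_ex[OF c2] by blast
  obtain u1' where u1': "u1 = u1' @ [c]" using u1(1,3) by (metis append_butlast_last_id wk_ne)
  obtain u2' where u2': "u2 = c # u2'" using u2(1,2) by (cases u2) auto
  have "wk E (u1' @ c # u2')" using wk_append u1(1) u2(1) u1' u2' by simp
  moreover have "hd (u1' @ c # u2') = i" using u1(2) u1' by (cases u1') auto
  moreover have "last (u1' @ c # u2') = j" using u2(3) u2' by (cases u2') auto
  ultimately have "tree_dist E i j \<le> length (u1' @ c # u2') - 1" by (rule dist_le)
  then have "tree_dist E i j \<le> tree_dist E i c + tree_dist E c j" using u1(4) u2(4) u1' u2' by simp
  then show ?thesis using ge by simp
qed



lemma tree_edge: "is_tree L E \<Longrightarrow> {a, b} \<in> E \<Longrightarrow> a < L \<and> b < L \<and> a \<noteq> b"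
proof -
  assume t: "is_tree L E" and e: "{a, b} \<in> E"
  then obtain u v where "{a, b} = {u, v}" "u \<noteq> v" "u < L" "v < L" unfolding is_tree_def by blast
  then show ?thesis by (auto simp: doubleton_eq_iff)
qed

lemma tree_conn: "is_tree L E \<Longrightarrow> i < L \<Longrightarrow> j < L \<Longrightarrow> conn E UNIV i j"
  unfolding is_tree_def conn_def by (auto simp: is_walk_wk)

lemma walk_range: "is_tree L E \<Longrightarrow> wk E ws \<Longrightarrow> hd ws < L \<Longrightarrow> set ws \<subseteq> {..<L}"
proof (induction E ws rule: wk.induct)
  case (3 E a b ws)
  then have "{a, b} \<in> E" by simp
  then have "b < L" using tree_edge[OF 3(2)] by blast
  then show ?case using 3 by auto
qed auto

lemma prefix_walk: "wk E ws \<Longrightarrow> k < length ws \<Longrightarrow>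
  wk E (take (Suc k) ws) \<and> hd (take (Suc k) ws) = hd ws \<and> last (take (Suc k) ws) = ws ! k \<and> length (take (Suc k) ws) = Suc k"
proof -
  assume w: "wk E ws" and k: "k < length ws"
  have s: "ws = take k ws @ ws ! k # drop (Suc k) ws" using k by (rule id_take_nth_drop)
  have t: "take (Suc k) ws = take k ws @ [ws ! k]" using k by (rule take_Suc_conv_app_nth)
  have "wk E (take k ws @ [ws ! k])" using wk_append'[of E "take k ws" "ws ! k" "drop (Suc k) ws"] w s by simp
  moreover have "hd (take (Suc k) ws) = hd ws" by (simp add: hd_take)
  ultimately show ?thesis using t k by simp
qed

lemma lower_bound:
  assumes fF: "finite F" and L: "L \<ge> 1" and cn: "\<forall>v<L. conn F UNIV 0 v"
  shows "L - 1 \<le> card F"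
proof -
  define d where "d v = tree_dist F 0 v" for v
  define W where "W v = (SOME ws. wk F ws \<and> hd ws = 0 \<and> last ws = v \<and> length ws = Suc (d v))" for v
  have W: "wk F (W v) \<and> hd (W v) = 0 \<and> last (W v) = v \<and> length (W v) = Suc (d v)" if "v < L" for v
    unfolding W_def d_def using dist_ex[OF cn[rule_format, OF that]] by (rule someI_ex)
  define pr where "pr v = W v ! (d v - 1)" for v
  define e where "e v = {pr v, v}" for v
  have props: "e v \<in> F \<and> d (pr v) < d v" if v: "v \<in> {1..<L}" for v
  proof -
    have vL: "v < L" using v by simp
    note Wv = W[OF vL]
    have d1: "d v \<ge> 1"
    proof (rule ccontr)
      assume "\<not> d v \<ge> 1"
      then have "length (W v) = 1" using Wv by simp
      then have "hd (W v) = last (W v)" by (cases "W v") auto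
      then show False using Wv v by simp
    qed
    have "W v \<noteq> []" using Wv by auto
    have l: "last (W v) = v" and len: "length (W v) = Suc (d v)" using Wv by auto
    have lastn: "W v ! d v = v" using l len last_conv_nth[OF \<open>W v \<noteq> []\<close>] by simp
    have "Suc (d v - 1) < length (W v)" using Wv d1 by simp
    then have "{W v ! (d v - 1), W v ! Suc (d v - 1)} \<in> F" using Wv unfolding is_walk_wk[symmetric] is_walk_def by blast
    then have eF: "e v \<in> F" unfolding e_def pr_def using d1 lastn by simp
    have "d v - 1 < length (W v)" using Wv by simp
    note pw = prefix_walk[OF conjunct1[OF Wv] this]
    have "tree_dist F 0 (pr v) \<le> length (take (Suc (d v - 1)) (W v)) - 1"
      using dist_le[of F "take (Suc (d v - 1)) (W v)" 0 "pr v"] pw Wv unfolding pr_def by simp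
    then have "d (pr v) < d v" using pw d1 unfolding d_def by simp
    then show ?thesis using eF by simp
  qed
  have inj: "inj_on e {1..<L}"
  proof (rule inj_onI)
    fix v v' assume v: "v \<in> {1..<L}" and v': "v' \<in> {1..<L}" and eq: "e v = e v'"
    show "v = v'"
    proof (rule ccontr)
      assume ne: "v \<noteq> v'"
      then have h: "pr v = v'" "pr v' = v" using eq unfolding e_def by (auto simp: doubleton_eq_iff)
      have "d (pr v) < d v" "d (pr v') < d v'" using props[OF v] props[OF v'] by simp_all
      then show False using h by simp
    qed
  qed
  have "e ` {1..<L} \<subseteq> F" using props by blast
  then have "card (e ` {1..<L}) \<le> card F" using fF by (rule card_mono[rotated])
  then show ?thesis using card_image[OF inj] by simp
qed

lemma walk_reroute:
  assumes cuv: "conn F UNIV u v" and F: "F = E - {{u, v}}"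
  shows "wk E (a # ws) \<Longrightarrow> conn F UNIV a (last (a # ws))"
proof (induction ws arbitrary: a)
  case Nil then show ?case by (simp add: conn_refl)
next
  case (Cons b ws)
  have e: "{a, b} \<in> E" and w: "wk E (b # ws)" using Cons.prems by simp_all
  have ab: "conn F UNIV a b"
  proof (cases "{a, b} = {u, v}")
    case True
    then have "(a = u \<and> b = v) \<or> (a = v \<and> b = u)" by (auto simp: doubleton_eq_iff)
    then show ?thesis using cuv conn_sym by blast
  next
    case False
    then have "{a, b} \<in> F" using e F by simp
    then show ?thesis by (intro conn_edge) auto
  qed
  have "conn F UNIV b (last (b # ws))" using Cons.IH[OF w] .
  then show ?case using conn_trans[OF ab] by simp
qed



lemma bridge:
  assumes t: "is_tree L E" and e: "{u, v} \<in> E"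
  shows "\<not> conn (E - {{u, v}}) UNIV u v"
proof
  assume c: "conn (E - {{u, v}}) UNIV u v"
  define F where "F = E - {{u, v}}"
  have uv: "u < L" "v < L" "u \<noteq> v" using tree_edge[OF t e] by auto
  have fE: "finite E" and cE: "card E = L - 1" using t unfolding is_tree_def by auto
  have "\<forall>x<L. conn F UNIV 0 x"
  proof (intro allI impI)
    fix x assume x: "x < L"
    obtain ws where ws: "wk E ws" "hd ws = 0" "last ws = x"
      using tree_conn[OF t _ x, of 0] uv unfolding conn_def by auto
    obtain ws' where "ws = 0 # ws'" using ws by (cases ws) auto
    then show "conn F UNIV 0 x" using walk_reroute[OF c[folded F_def] F_def, of 0 ws'] ws by simp
  qed
  then have "L - 1 \<le> card F" using lower_bound[of F L] fE uv unfolding F_def by simp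
  moreover have "card F = card E - 1" unfolding F_def using fE e by simp
  ultimately show False using cE uv by simp
qed

lemma avoid_walk: "wk E ws \<Longrightarrow> c \<notin> set ws \<Longrightarrow> c \<in> e \<Longrightarrow> wk (E - {e}) ws"
  by (induction E ws rule: wk.induct) auto

lemma nbr_unique:
  assumes t: "is_tree L E" and c: "conn E (- {c}) a b" and ac: "{a, c} \<in> E" and bc: "{b, c} \<in> E"
  shows "a = b"
proof (rule ccontr)
  assume ne: "a \<noteq> b"
  obtain ws where ws: "wk E ws" "hd ws = a" "last ws = b" "set ws \<subseteq> - {c}" using c unfolding conn_def by blast
  have w1: "wk (E - {{a, c}}) ws" using avoid_walk[OF ws(1), of c "{a, c}"] ws(4) by auto
  obtain ws' where ws': "ws = ws' @ [b]" using ws(1,3) by (metis append_butlast_last_id wk_ne)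
  have "b \<noteq> c" using ws(3,4) ws' by auto
  then have "{b, c} \<noteq> {a, c}" using ne by (auto simp: doubleton_eq_iff)
  then have w2: "wk (E - {{a, c}}) [b, c]" using bc by simp
  have "wk (E - {{a, c}}) (ws' @ [b, c])" using wk_append[of _ ws' b "[c]"] w1 w2 ws' by simp
  moreover have "hd (ws' @ [b, c]) = a" using ws(2) ws' by (cases ws') auto
  ultimately have "conn (E - {{a, c}}) UNIV a c" unfolding conn_def by (intro exI[of _ "ws' @ [b, c]"]) simp
  then show False using bridge[OF t ac] by simp
qed



lemma hit_c:
  assumes Sc: "\<forall>a\<in>S. \<forall>b\<in>S. conn E S a b" and cS: "c \<in> S" and a: "a \<in> S" "a \<noteq> c"
  shows "\<exists>b. {b, c} \<in> E \<and> conn E (S - {c}) a b"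
  using first_hit[of E S a c] Sc cS a by blast

lemma sep_tree:
  assumes t: "is_tree L E" and SL: "S \<subseteq> {..<L}" and cS: "c \<in> S" and Sc: "\<forall>a\<in>S. \<forall>b\<in>S. conn E S a b"
    and i: "i \<in> S - {c}" and j: "j \<in> S" and nj: "j \<notin> compo E (S - {c}) i"
  shows "tree_dist E i j = tree_dist E i c + tree_dist E c j"
proof (cases "j = c")
  case True then show ?thesis by (simp add: dist_self)
next
  case False
  have cij: "conn E UNIV i j" using tree_conn[OF t] i j SL by auto
  show ?thesis
  proof (rule dist_sep[OF cij], intro allI impI)
    fix ws assume ws: "wk E ws \<and> hd ws = i \<and> last ws = j"
    show "c \<in> set ws"
    proof (rule ccontr)
      assume "c \<notin> set ws"
      then have cw: "conn E (- {c}) i j" unfolding conn_def using ws by (intro exI[of _ ws]) auto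
      obtain a' where a': "{a', c} \<in> E" "conn E (S - {c}) i a'" using hit_c[OF Sc cS] i by auto
      obtain b' where b': "{b', c} \<in> E" "conn E (S - {c}) j b'" using hit_c[OF Sc cS] j False by auto
      have sub: "S - {c} \<subseteq> - {c}" by auto
      have "conn E (- {c}) a' b'"
        using conn_trans[OF conn_trans[OF conn_sym[OF conn_mono[OF a'(2) sub]] cw] conn_mono[OF b'(2) sub]] .
      then have "a' = b'" using nbr_unique[OF t _ a'(1) b'(1)] by simp
      then have "conn E (S - {c}) a' j" using conn_sym[OF b'(2)] by simp
      then have "conn E (S - {c}) i j" using conn_trans[OF a'(2)] by simp
      then show False using nj unfolding compo_def by simp
    qed
  qed
qed

lemma bound_tree:
  assumes cS: "c \<in> S" and fS: "finite S" and Sc: "\<forall>a\<in>S. \<forall>b\<in>S. conn E S a b" and i: "i \<in> S - {c}"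
  shows "tree_dist E i c \<le> card (compo E (S - {c}) i) \<and> tree_dist E c i \<le> card (compo E (S - {c}) i)"
proof -
  define T where "T = compo E (S - {c}) i"
  obtain b where b: "{b, c} \<in> E" "conn E (S - {c}) i b" using hit_c[OF Sc cS] i by auto
  have ib: "conn E T i b" unfolding T_def by (rule conn_comp[OF b(2)])
  have TS: "T \<subseteq> S - {c}" unfolding T_def by (rule comp_sub)
  have bT: "b \<in> T" using conn_mem[OF ib] by simp
  have "conn E (insert c T) i b" using conn_mono[OF ib] by auto
  moreover have "conn E (insert c T) b c" using b(1) bT by (intro conn_edge) auto
  ultimately have ic: "conn E (insert c T) i c" by (rule conn_trans)
  have fin: "finite (insert c T)" using TS fS finite_subset by blast
  have cT: "c \<notin> T" using TS by auto
  have "card (insert c T) = Suc (card T)" using cT fin by simp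
  then show ?thesis using dist_lt_card[OF ic fin] dist_lt_card[OF conn_sym[OF ic] fin] unfolding T_def by simp
qed



lemma centroid:
  assumes t: "is_tree L E" and SL: "S \<subseteq> {..<L}" and ne: "S \<noteq> {}" and Sc: "\<forall>a\<in>S. \<forall>b\<in>S. conn E S a b"
  shows "\<exists>c\<in>S. \<forall>a\<in>S - {c}. 2 * card (compo E (S - {c}) a) \<le> card S"
proof -
  have fS: "finite S" using SL finite_subset by blast
  define \<mu> where "\<mu> c = Max (insert 0 ((\<lambda>a. card (compo E (S - {c}) a)) ` (S - {c})))" for c
  have fin\<mu>: "finite (insert 0 ((\<lambda>a. card (compo E (S - {c}) a)) ` (S - {c})))" for c using fS by simp
  obtain c where cS: "c \<in> S" and cmin: "\<forall>c'\<in>S. \<mu> c \<le> \<mu> c'"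
  proof -
    have "Min (\<mu> ` S) \<in> \<mu> ` S" using fS ne by (intro Min_in) auto
    then obtain c where "c \<in> S" "\<mu> c = Min (\<mu> ` S)" by auto
    moreover have "\<forall>c'\<in>S. Min (\<mu> ` S) \<le> \<mu> c'" using fS by auto
    ultimately show ?thesis using that by auto
  qed
  show ?thesis
  proof (rule bexI[OF _ cS], rule ccontr)
    assume "\<not> (\<forall>a\<in>S - {c}. 2 * card (compo E (S - {c}) a) \<le> card S)"
    then obtain a where a: "a \<in> S - {c}" and big: "2 * card (compo E (S - {c}) a) > card S" using not_le by blast
    define T where "T = compo E (S - {c}) a"
    have TS: "T \<subseteq> S - {c}" unfolding T_def by (rule comp_sub)
    have fT: "finite T" using TS fS finite_subset by blast
    have aT: "a \<in> T" unfolding T_def using a by (rule comp_self)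
    have "card T > 0" using aT fT card_gt_0_iff by blast
    then have cardT: "card T \<ge> 1" by simp
    have "card T \<le> \<mu> c" unfolding \<mu>_def T_def using a fin\<mu>[of c] by (intro Max_ge) auto
    obtain u where u: "{u, c} \<in> E" "conn E (S - {c}) a u" using hit_c[OF Sc cS] a by auto
    have uT: "u \<in> T" unfolding T_def compo_def using u(2) by simp
    have uS: "u \<in> S" "u \<noteq> c" using uT TS by auto
    have claim: "card (compo E (S - {u}) w) < card T" if w: "w \<in> S - {u}" for w
    proof -
      define T' where "T' = compo E (S - {u}) w"
      have T'S: "T' \<subseteq> S - {u}" unfolding T'_def by (rule comp_sub)
      show ?thesis
      proof (cases "c \<in> T'")
        case True
        have disj: "T' \<inter> T = {}"
        proof (rule ccontr)
          assume "T' \<inter> T \<noteq> {}"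
          then obtain t' where t': "t' \<in> T'" "t' \<in> T" by auto
          have "conn E (S - {u}) t' c" using t'(1) True unfolding T'_def compo_def
            using conn_trans conn_sym by blast
          moreover have "t' \<noteq> c" using t'(2) TS by auto
          ultimately obtain b where b: "{b, c} \<in> E" "conn E (S - {u} - {c}) t' b"
            using first_hit by blast
          have bS: "b \<in> S - {u} - {c}" using conn_mem[OF b(2)] by simp
          have "conn E (S - {c}) t' b" using conn_mono[OF b(2)] by auto
          moreover have "conn E (S - {c}) a t'" using t'(2) unfolding T_def compo_def by simp
          ultimately have "conn E (S - {c}) u b" using conn_trans conn_sym u(2) by blast
          then have "conn E (- {c}) u b" using conn_mono by blast
          then have "u = b" using nbr_unique[OF t _ u(1) b(1)] by simp
          then show False using bS by simp
        qed
        have "T' \<subseteq> S - T" using disj T'S by auto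
        then have "card T' \<le> card (S - T)" using fS by (intro card_mono) auto
        also have "\<dots> = card S - card T" using TS fT by (intro card_Diff_subset) auto
        finally show ?thesis using big unfolding T'_def T_def by simp
      next
        case False
        have "T' \<subseteq> T - {u}"
        proof
          fix x assume x: "x \<in> T'"
          have xS: "x \<in> S" "x \<noteq> u" using x T'S by auto
          have "x \<in> T"
          proof (rule ccontr)
            assume xT: "x \<notin> T"
            have xc: "x \<noteq> c" using x False by auto
            obtain b where b: "{b, c} \<in> E" "conn E (S - {c}) x b" using hit_c[OF Sc cS] xS xc by auto
            have cb: "conn E (compo E (S - {c}) x) x b" by (rule conn_comp[OF b(2)])
            have "compo E (S - {c}) x \<subseteq> S - {u}"
            proof
              fix y assume y: "y \<in> compo E (S - {c}) x"
              then have yS: "y \<in> S - {c}" using comp_sub by blast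
              have "y \<noteq> u"
              proof
                assume "y = u"
                then have "conn E (S - {c}) x u" using y unfolding compo_def by simp
                then have "conn E (S - {c}) a x" using u(2) conn_trans conn_sym by blast
                then show False using xT unfolding T_def compo_def by simp
              qed
              then show "y \<in> S - {u}" using yS by simp
            qed
            then have xb: "conn E (S - {u}) x b" using conn_mono[OF cb] by simp
            have "b \<in> S - {u}" using conn_mem[OF xb] by simp
            then have "conn E (S - {u}) b c" using b(1) cS uS by (intro conn_edge) (auto simp: insert_commute)
            then have "conn E (S - {u}) x c" using conn_trans[OF xb] by simp
            moreover have "conn E (S - {u}) w x" using x unfolding T'_def compo_def by simp
            ultimately have "c \<in> T'" unfolding T'_def compo_def using conn_trans by blast
            then show False using False by simp
          qed
          then show "x \<in> T - {u}" using xS by simp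
        qed
        then have "card T' \<le> card (T - {u})" using fT by (intro card_mono) auto
        also have "\<dots> = card T - 1" using uT fT by simp
        finally show ?thesis using cardT unfolding T'_def by simp
      qed
    qed
    have "\<mu> u < card T" unfolding \<mu>_def using claim cardT fin\<mu>[of u]
      by (subst Max_less_iff) auto
    then show False using cmin uS \<open>card T \<le> \<mu> c\<close> by fastforce
  qed
qed



lemma tree_good_aux:
  assumes t: "is_tree L E"
  shows "\<forall>S. card S = n \<longrightarrow> S \<subseteq> {..<L} \<longrightarrow> S \<noteq> {} \<longrightarrow> (\<forall>a\<in>S. \<forall>b\<in>S. conn E S a b) \<longrightarrow> good (tree_dist E) S"
proof (induction n rule: less_induct)
  case (less n)
  show ?case
  proof (intro allI impI)
    fix S assume n: "card S = n" and SL: "S \<subseteq> {..<L}" and ne: "S \<noteq> {}" and Sc: "\<forall>a\<in>S. \<forall>b\<in>S. conn E S a b"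
    have fS: "finite S" using SL finite_subset by blast
    obtain c where cS: "c \<in> S" and cen: "\<forall>a\<in>S - {c}. 2 * card (compo E (S - {c}) a) \<le> card S"
      using centroid[OF t SL ne Sc] by blast
    define A where "A = S - {c}"
    define CS where "CS = compo E A ` A"
    have fCS: "finite CS" unfolding CS_def A_def using fS by simp
    obtain Ts where Ts: "set Ts = CS" "distinct Ts" using finite_distinct_list[OF fCS] by blast
    show "good (tree_dist E) S"
    proof (rule goodI[of S c Ts])
      show "finite S" by fact
      show "c \<in> S" by fact
      show "\<forall>T\<in>set Ts. good (tree_dist E) T \<and> T \<subseteq> S \<and> 2 * card T \<le> card S \<and>
        (\<forall>i\<in>T. \<forall>j\<in>S - T. tree_dist E i j = tree_dist E i c + tree_dist E c j) \<and>
        (\<forall>i\<in>T. tree_dist E i c \<le> card T) \<and> (\<forall>j\<in>T. tree_dist E c j \<le> card T)"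
      proof
        fix T assume "T \<in> set Ts"
        then obtain a where a: "a \<in> A" and T: "T = compo E A a" using Ts unfolding CS_def by auto
        have TA: "T \<subseteq> A" unfolding T by (rule comp_sub)
        have TS: "T \<subseteq> S" using TA unfolding A_def by auto
        have ceq: "compo E A i = T" if "i \<in> T" for i
          using that comp_eq[of E A a i] unfolding T compo_def by simp
        have goodT: "good (tree_dist E) T"
        proof -
          have "T \<subset> S" using TA cS unfolding A_def by auto
          then have "card T < n" using psubset_card_mono[OF fS] n by blast
          moreover have "T \<noteq> {}" using a comp_self unfolding T by blast
          moreover have "\<forall>x\<in>T. \<forall>y\<in>T. conn E T x y"
          proof (intro ballI)
            fix x y assume x: "x \<in> T" and y: "y \<in> T"
            have "conn E A a x" "conn E A a y" using x y unfolding T compo_def by auto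
            then have "conn E A x y" using conn_trans conn_sym by blast
            then have "conn E (compo E A x) x y" by (rule conn_comp)
            then show "conn E T x y" using ceq[OF x] by simp
          qed
          ultimately show ?thesis using less.IH TS SL by blast
        qed
        have sep: "\<forall>i\<in>T. \<forall>j\<in>S - T. tree_dist E i j = tree_dist E i c + tree_dist E c j"
        proof (intro ballI)
          fix i j assume i: "i \<in> T" and j: "j \<in> S - T"
          have "i \<in> S - {c}" using i TA unfolding A_def by auto
          moreover have "j \<notin> compo E (S - {c}) i" using ceq[OF i] j unfolding A_def by simp
          ultimately show "tree_dist E i j = tree_dist E i c + tree_dist E c j"
            using sep_tree[OF t SL cS Sc] j by blast
        qed
        have bnd: "tree_dist E i c \<le> card T \<and> tree_dist E c i \<le> card T" if i: "i \<in> T" for i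
        proof -
          have "i \<in> S - {c}" using i TA unfolding A_def by auto
          then show ?thesis using bound_tree[OF cS fS Sc] ceq[OF i] unfolding A_def by auto
        qed
        have "2 * card T \<le> card S" using cen a unfolding T A_def by simp
        then show "good (tree_dist E) T \<and> T \<subseteq> S \<and> 2 * card T \<le> card S \<and>
          (\<forall>i\<in>T. \<forall>j\<in>S - T. tree_dist E i j = tree_dist E i c + tree_dist E c j) \<and>
          (\<forall>i\<in>T. tree_dist E i c \<le> card T) \<and> (\<forall>j\<in>T. tree_dist E c j \<le> card T)"
          using goodT TS sep bnd by blast
      qed
      show "\<forall>i\<in>S - {c}. \<exists>T\<in>set Ts. i \<in> T"
      proof
        fix i assume "i \<in> S - {c}"
        then have "i \<in> A" unfolding A_def .
        then have "compo E A i \<in> set Ts" "i \<in> compo E A i" using Ts(1) comp_self[of i A E] unfolding CS_def by auto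
        then show "\<exists>T\<in>set Ts. i \<in> T" by blast
      qed
      show "(\<Sum>T\<leftarrow>Ts. card T) \<le> card S"
      proof -
        have "(\<Sum>T\<leftarrow>Ts. card T) = sum card CS" using Ts by (simp add: sum_list_distinct_conv_sum_set)
        also have "\<dots> = card (\<Union>CS)"
        proof (rule card_Union_disjoint[symmetric])
          show "pairwise disjnt CS"
          proof (rule pairwiseI)
            fix X Y assume X: "X \<in> CS" and Y: "Y \<in> CS" and XY: "X \<noteq> Y"
            then obtain x y where x: "X = compo E A x" and y: "Y = compo E A y" unfolding CS_def by auto
            show "disjnt X Y"
            proof (rule ccontr)
              assume "\<not> disjnt X Y"
              then obtain z where "z \<in> X" "z \<in> Y" unfolding disjnt_def by auto
              then have "compo E A z = X" "compo E A z = Y"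
                using comp_eq[of E A x z] comp_eq[of E A y z] unfolding x y compo_def by auto
              then show False using XY by simp
            qed
          qed
          show "\<And>X. X \<in> CS \<Longrightarrow> finite X"
          proof -
            fix X assume "X \<in> CS"
            then obtain x where "X = compo E A x" unfolding CS_def by auto
            then have "X \<subseteq> S" using comp_sub[of E A x] unfolding A_def by auto
            then show "finite X" using fS by (rule finite_subset)
          qed
        qed
        also have "\<dots> \<le> card S"
        proof (rule card_mono[OF fS])
          show "\<Union>CS \<subseteq> S"
          proof
            fix z assume "z \<in> \<Union>CS"
            then obtain x where "z \<in> compo E A x" unfolding CS_def by auto
            then show "z \<in> S" using comp_sub[of E A x] unfolding A_def by auto
          qed
        qed
        finally show ?thesis .
      qed
      show "\<forall>j\<in>S. tree_dist E c j \<le> card S"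
      proof
        fix j assume "j \<in> S"
        then have "conn E S c j" using Sc cS by blast
        then show "tree_dist E c j \<le> card S" using dist_lt_card[OF _ fS] less_imp_le by blast
      qed
    qed
  qed
qed

lemma tree_good: "is_tree L E \<Longrightarrow> L \<ge> 1 \<Longrightarrow> good (tree_dist E) {..<L}"
proof -
  assume t: "is_tree L E" and L: "L \<ge> 1"
  have "\<forall>a\<in>{..<L}. \<forall>b\<in>{..<L}. conn E {..<L} a b"
  proof (intro ballI)
    fix a b assume a: "a \<in> {..<L}" and b: "b \<in> {..<L}"
    obtain ws where ws: "wk E ws" "hd ws = a" "last ws = b" using tree_conn[OF t] a b unfolding conn_def by auto
    have "set ws \<subseteq> {..<L}" using walk_range[OF t ws(1)] ws(2) a by simp
    then show "conn E {..<L} a b" using ws unfolding conn_def by blast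
  qed
  moreover have "0 \<in> {..<L}" using L by simp
  then have "{..<L} \<noteq> {}" by blast
  ultimately show ?thesis using tree_good_aux[OF t] by blast
qed


lemma log_bound:
  fixes L h :: nat
  assumes L: "L \<ge> 2" and h: "2^h < 2*L"
  shows "real ((h+1)^2) \<le> 9 * (log 2 (real L))^2"
proof -
  have "(2::real) powr real h = 2^h" by (simp add: powr_realpow)
  also have "\<dots> < 2 * real L" using h by (metis of_nat_less_iff of_nat_mult of_nat_numeral of_nat_power)
  finally have "real h < log 2 (2 * real L)" using L by (subst less_log_iff) auto
  also have "log 2 (2 * real L) = 1 + log 2 (real L)" using L by (simp add: log_mult)
  finally have h1: "real h + 1 < 2 + log 2 (real L)" by simp
  have "log 2 2 \<le> log 2 (real L)" using L by (subst log_le_cancel_iff) auto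
  then have l1: "1 \<le> log 2 (real L)" by simp
  have "real h + 1 \<le> 3 * log 2 (real L)" using h1 l1 by simp
  then have "(real h + 1)^2 \<le> (3 * log 2 (real L))^2" by (intro power_mono) auto
  then show ?thesis by (simp add: power_mult_distrib add.commute)
qed

theorem lemma6p1:
  shows "\<exists>C>0. \<forall>L\<ge>2. \<forall>E. is_tree L E \<longrightarrow>
    (\<exists>p out. real (length p) \<le> C * real L * (log 2 (real L))^2 \<and> length out = L \<and>
       (\<forall>(f::nat \<Rightarrow> real) (x::nat \<Rightarrow> real). \<forall>i<L.
          prog_val p f x (out ! i) = (\<Sum>j<L. f (tree_dist E i j) * x j)))"
proof (intro exI[of _ "9 * real BB"] conjI allI impI)
  show "(0::real) < 9 * real BB" by simp
  fix L E assume L: "2 \<le> L" and t: "is_tree L E"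
  have g: "good (tree_dist E) {..<L}" using tree_good[OF t] L by simp
  define h where "h = clog L"
  have Lh: "card {..<L} \<le> 2^h" unfolding h_def using clog_ge by simp
  obtain q out where q: "length q \<le> BB * card {..<L} * (h+1)^2"
    "\<forall>i\<in>{..<L}. R ([] @ q) (out i) (outv (tree_dist E) {..<L} i)"
    using rec_build[OF g] Lh by blast
  have hl: "2^h < 2*L" unfolding h_def using L by (intro clog_lt) simp
  show "\<exists>p out. real (length p) \<le> 9 * real BB * real L * (log 2 (real L))^2 \<and> length out = L \<and>
       (\<forall>(f::nat \<Rightarrow> real) (x::nat \<Rightarrow> real). \<forall>i<L.
          prog_val p f x (out ! i) = (\<Sum>j<L. f (tree_dist E i j) * x j))"
  proof (intro exI[of _ q] exI[of _ "map out [0..<L]"] conjI allI impI)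
    have "real (length q) \<le> real BB * real L * real ((h+1)^2)"
      using q(1) by (metis card_lessThan of_nat_le_iff of_nat_mult)
    also have "\<dots> \<le> real BB * real L * (9 * (log 2 (real L))^2)"
      using log_bound[OF L hl] by (intro mult_left_mono) auto
    finally show "real (length q) \<le> 9 * real BB * real L * (log 2 (real L))^2" by simp
    show "length (map out [0..<L]) = L" by simp
    fix f x :: "nat \<Rightarrow> real" and i assume i: "i < L"
    have "ev q (out i) = outv (tree_dist E) {..<L} i" using q(2) i unfolding R_def by simp
    then have "ev q (out i) (f, x) = outv (tree_dist E) {..<L} i (f, x)" by simp
    then show "prog_val q f x (map out [0..<L] ! i) = (\<Sum>j<L. f (tree_dist E i j) * x j)"
      using i unfolding ev_def outv_def by simp
  qed
qed

end
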